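(* Let $P$ be a valid path, let $V_P$ be the revenue computed by \textsc{MaxRev}$(P)$, and suppose $V_P<\frac{1}{\alpha(m_T^P)}B(P)$. Then at least one of the two paths $P'\in\{P_1,P_2\}$ returned by \textsc{TollPartition} applied to $P$ satisfies $$\frac{1}{\alpha(m_T^{P'})}B(P')\ \ge\ \frac{1}{\alpha(m_T^P)}B(P).$$
   Context: Setting: $G=(V,A)$ is a directed multigraph with $A=A_T\cup A_U$ partitioned into toll arcs and toll-free arcs, fixed costs $c:A_T\to\mathbf{N}$, $d:A_U\to\mathbf{N}$, and vertices $s,t$ such that there is an $s$–$t$ path using only toll-free arcs. Under a nonnegative toll vector $T$ a toll arc $e$ costs $c(e)+T(e)$ and a toll-free arc costs $d(e)$; path length is the sum of arc costs. $\mathcal{N}_T(P)$ is the network with all toll arcs not on $P$ deleted. An $s$–$t$ path $P$ is valid if it contains $m_T^P\ge1$ toll arcs and is a shortest $s$–$t$ path in $\mathcal{N}_0(P)$. For a path $P$ with toll arcs $\tau_1,\dots,\tau_m$ (in traversal order, $m=m_T^P$), set $\mathrm{TERM}(\tau_0)=s$, $\mathrm{INIT}(\tau_{m+1})=t$; $\mathcal{U}_{i,j}$ ($0\le i<j\le m+1$) is the length of a shortest toll-free path from $\mathrm{TERM}(\tau_i)$ to $\mathrm{INIT}(\tau_j)$ ($+\infty$ if none), $\upsilon_{i,j}$ is such a path, and $\mathcal{L}_{k,l}=\sum_{i=k}^{l-1}\mathcal{U}_{i,i+1}+\sum_{i=k+1}^{l-1}c(\tau_i)$. Let $\mathcal{L}_\infty$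 be the length of a shortest toll-free $s$–$t$ path and $\mathcal{L}(P)$ the length of $P$ with all tolls zero; $B(P)=\mathcal{L}_\infty-\mathcal{L}(P)$. Define $\alpha(1)=1$ and, for $k\ge2$, $\alpha(k)=\frac12\max\{1+\alpha(i)+\alpha(j):\ 0<i\le j<k,\ i+j\le k\}$. \textsc{MaxRev}$(P)$: set $k:=1$; while $k<m+1$: compute $t_k=\min_{0\le i<k<j\le m+1}\{\mathcal{U}_{i,j}-\mathcal{L}_{i,j}-\sum_{l=i+1}^{k-1}t_l\}$, let $(i'(k),j'(k))$ be the minimizing pair (ties broken by largest $j$, then smallest $i$), set $t_l:=0$ and $(i'(l),j'(l)):=(i'(k),j'(k))$ for all $k<l<j'(k)$, and set $k:=j'(k)$. Output tolls $T(\tau_k)=t_k$ on $P$ ($+\infty$ off $P$), revenue $V_P=\sum_{k=1}^m t_k$, and pairs $(i'(k),j'(k))_{k=1}^m$. \textsc{TollPartition}$(P)$: starting from $l:=m$, repeatedly record the pair $(i'(l),j'(l))$ and set $l:=i'(l)$ until $l=0$; let $q$ be the number of recorded pairs and let $(i(1),j(1)),\dots,(i(q),j(q))$ be the recorded pairs in reverse order of recording (so $i(1)=0$, $j(q)=m+1$). $P_1$ is the $s$–$t$ path that uses $\upsilon_{i(h),j(h)}$ for all odd $h$ and follows $P$ in between (from $\mathrm{INIT}(\tau_{j(h)})$ to $\mathrm{TERM}(\tau_{i(h+2)})$, from $s$ to $\mathrm{TERM}(\tau_{i(h)})$ before the first, and from $\mathrm{INIT}(\tau_{j(h)})$ to $t$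 after the last); $P_2$ is constructed in the same way from the even indices $h$. *)

theory Defs
  imports Complex_Main "HOL-Library.Extended_Real"
begin

text \<open>Arcs have type 'e, vertices type 'v; ini e and ter e are the tail (INIT) and head (TERM)
 of arc e.  Parallel arcs are allowed (multigraph).  A = AT \<union> AU, with AT the toll arcs
 (fixed cost c) and AU the toll-free arcs (cost d).\<close>

definition toll_network ::
  "'v set \<Rightarrow> 'e set \<Rightarrow> 'e set \<Rightarrow> ('e \<Rightarrow> 'v) \<Rightarrow> ('e \<Rightarrow> 'v) \<Rightarrow> 'v \<Rightarrow> 'v \<Rightarrow> bool" where
  "toll_network V AT AU ini ter s t \<longleftrightarrow>
     finite V \<and> finite AT \<and> finite AU \<and> AT \<inter> AU = {} \<and>
     (\<forall>e \<in> AT \<union> AU. ini e \<in> V \<and> ter e \<in> V) \<and> s \<in> V \<and> t \<in> V"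

fun walk :: "('e \<Rightarrow> 'v) \<Rightarrow> ('e \<Rightarrow> 'v) \<Rightarrow> 'e set \<Rightarrow> 'v \<Rightarrow> 'e list \<Rightarrow> 'v \<Rightarrow> bool" where
  "walk ini ter F u [] v \<longleftrightarrow> u = v"
| "walk ini ter F u (e # p) v \<longleftrightarrow> e \<in> F \<and> ini e = u \<and> walk ini ter F (ter e) p v"

text \<open>Length of an arc list when all tolls are zero.\<close>
definition plen :: "'e set \<Rightarrow> ('e \<Rightarrow> nat) \<Rightarrow> ('e \<Rightarrow> nat) \<Rightarrow> 'e list \<Rightarrow> nat" where
  "plen AT c d p = (\<Sum>e \<leftarrow> p. if e \<in> AT then c e else d e)"

text \<open>Length of a shortest toll-free walk from u to v (\<infinity> if none).\<close>
definition dist_tf ::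
  "'e set \<Rightarrow> ('e \<Rightarrow> 'v) \<Rightarrow> ('e \<Rightarrow> 'v) \<Rightarrow> 'e set \<Rightarrow> ('e \<Rightarrow> nat) \<Rightarrow> ('e \<Rightarrow> nat) \<Rightarrow> 'v \<Rightarrow> 'v \<Rightarrow> ereal" where
  "dist_tf AT ini ter AU c d u v =
     (INF p \<in> {p. walk ini ter AU u p v}. ereal (real (plen AT c d p)))"

definition toll_pos :: "'e set \<Rightarrow> 'e list \<Rightarrow> nat list" where
  "toll_pos AT P = [i \<leftarrow> [0..<length P]. P ! i \<in> AT]"

definition mT :: "'e set \<Rightarrow> 'e list \<Rightarrow> nat" where
  "mT AT P = length (toll_pos AT P)"

text \<open>tau k is the k-th toll arc of P (1 \<le> k \<le> m).\<close>
definition tau :: "'e set \<Rightarrow> 'e list \<Rightarrow> nat \<Rightarrow> 'e" where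
  "tau AT P k = P ! (toll_pos AT P ! (k - 1))"

definition TERMv :: "'e set \<Rightarrow> ('e \<Rightarrow> 'v) \<Rightarrow> 'v \<Rightarrow> 'e list \<Rightarrow> nat \<Rightarrow> 'v" where
  "TERMv AT ter s P i = (if i = 0 then s else ter (tau AT P i))"

definition INITv :: "'e set \<Rightarrow> ('e \<Rightarrow> 'v) \<Rightarrow> 'v \<Rightarrow> 'e list \<Rightarrow> nat \<Rightarrow> 'v" where
  "INITv AT ini t P j = (if j = Suc (mT AT P) then t else ini (tau AT P j))"

definition UU ::
  "'e set \<Rightarrow> 'e set \<Rightarrow> ('e \<Rightarrow> 'v) \<Rightarrow> ('e \<Rightarrow> 'v) \<Rightarrow> ('e \<Rightarrow> nat) \<Rightarrow> ('e \<Rightarrow> nat) \<Rightarrow> 'v \<Rightarrow> 'v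
    \<Rightarrow> 'e list \<Rightarrow> nat \<Rightarrow> nat \<Rightarrow> ereal" where
  "UU AT AU ini ter c d s t P i j =
     dist_tf AT ini ter AU c d (TERMv AT ter s P i) (INITv AT ini t P j)"

definition LL ::
  "'e set \<Rightarrow> 'e set \<Rightarrow> ('e \<Rightarrow> 'v) \<Rightarrow> ('e \<Rightarrow> 'v) \<Rightarrow> ('e \<Rightarrow> nat) \<Rightarrow> ('e \<Rightarrow> nat) \<Rightarrow> 'v \<Rightarrow> 'v
    \<Rightarrow> 'e list \<Rightarrow> nat \<Rightarrow> nat \<Rightarrow> ereal" where
  "LL AT AU ini ter c d s t P k l =
     (\<Sum>i \<in> {k..<l}. UU AT AU ini ter c d s t P i (Suc i))
     + (\<Sum>i \<in> {Suc k..<l}. ereal (real (c (tau AT P i))))"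

definition Linf ::
  "'e set \<Rightarrow> 'e set \<Rightarrow> ('e \<Rightarrow> 'v) \<Rightarrow> ('e \<Rightarrow> 'v) \<Rightarrow> ('e \<Rightarrow> nat) \<Rightarrow> ('e \<Rightarrow> nat) \<Rightarrow> 'v \<Rightarrow> 'v \<Rightarrow> ereal" where
  "Linf AT AU ini ter c d s t = dist_tf AT ini ter AU c d s t"

definition BB ::
  "'e set \<Rightarrow> 'e set \<Rightarrow> ('e \<Rightarrow> 'v) \<Rightarrow> ('e \<Rightarrow> 'v) \<Rightarrow> ('e \<Rightarrow> nat) \<Rightarrow> ('e \<Rightarrow> nat) \<Rightarrow> 'v \<Rightarrow> 'v
    \<Rightarrow> 'e list \<Rightarrow> ereal" where
  "BB AT AU ini ter c d s t P = Linf AT AU ini ter c d s t - ereal (real (plen AT c d P))"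

text \<open>Valid path: an s-t walk with at least one toll arc which is a shortest s-t walk in N_0(P),
 the network in which all toll arcs not on P are deleted.\<close>
definition valid ::
  "'e set \<Rightarrow> 'e set \<Rightarrow> ('e \<Rightarrow> 'v) \<Rightarrow> ('e \<Rightarrow> 'v) \<Rightarrow> ('e \<Rightarrow> nat) \<Rightarrow> ('e \<Rightarrow> nat) \<Rightarrow> 'v \<Rightarrow> 'v
    \<Rightarrow> 'e list \<Rightarrow> bool" where
  "valid AT AU ini ter c d s t P \<longleftrightarrow>
     walk ini ter (AT \<union> AU) s P t \<and> mT AT P \<ge> 1 \<and>
     (\<forall>p. walk ini ter (AU \<union> (AT \<inter> set P)) s p t \<longrightarrow> plen AT c d P \<le> plen AT c d p)"

text \<open>alpha 1 = 1 and, for k \<ge> 2, alpha k = 1/2 max {1 + alpha i + alpha j : 0 < i \<le> j < k, i + j \<le> k}.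
 (The value at 0 is irrelevant and is set to 1.)\<close>
function alpha :: "nat \<Rightarrow> real" where
  "alpha k = (if k \<le> 1 then 1 else
     (1/2) * Max ((\<lambda>ij. 1 + alpha (fst ij) + alpha (snd ij)) `
                  {ij. 0 < fst ij \<and> fst ij \<le> snd ij \<and> snd ij < k \<and> fst ij + snd ij \<le> k}))"
  by pat_completeness auto
termination by (relation "measure id") auto

text \<open>One run of the while loop of MaxRev, with explicit fuel (the loop variable k strictly
 increases and stays \<le> m+1, so m+1 rounds suffice).  U and L are U_{i,j} and L_{i,j};
 the state consists of k, the values t_l and the pairs (i'(l), j'(l)).\<close>
fun maxrev_loop ::
  "nat \<Rightarrow> nat \<Rightarrow> (nat \<Rightarrow> nat \<Rightarrow> ereal) \<Rightarrow> (nat \<Rightarrow> nat \<Rightarrow> ereal) \<Rightarrow> nat \<Rightarrow> (nat \<Rightarrow> ereal)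
     \<Rightarrow> (nat \<Rightarrow> nat \<times> nat) \<Rightarrow> (nat \<Rightarrow> ereal) \<times> (nat \<Rightarrow> nat \<times> nat)" where
  "maxrev_loop 0 m U L k tt pr = (tt, pr)"
| "maxrev_loop (Suc f) m U L k tt pr =
     (if k < Suc m then
        (let val = (\<lambda>ij. U (fst ij) (snd ij) - L (fst ij) (snd ij) - (\<Sum>l \<in> {Suc (fst ij)..<k}. tt l));
             S = {ij. fst ij < k \<and> k < snd ij \<and> snd ij \<le> Suc m};
             mn = Min (val ` S);
             best = {ij \<in> S. val ij = mn};
             jb = Max (snd ` best);
             ib = Min {i. (i, jb) \<in> best};
             tt' = (\<lambda>l. if l = k then mn else if k < l \<and> l < jb then 0 else tt l);
             pr' = (\<lambda>l. if k \<le> l \<and> l < jb then (ib, jb) else pr l)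
         in maxrev_loop f m U L jb tt' pr')
      else (tt, pr))"

definition maxrev ::
  "'e set \<Rightarrow> 'e set \<Rightarrow> ('e \<Rightarrow> 'v) \<Rightarrow> ('e \<Rightarrow> 'v) \<Rightarrow> ('e \<Rightarrow> nat) \<Rightarrow> ('e \<Rightarrow> nat) \<Rightarrow> 'v \<Rightarrow> 'v
    \<Rightarrow> 'e list \<Rightarrow> (nat \<Rightarrow> ereal) \<times> (nat \<Rightarrow> nat \<times> nat)" where
  "maxrev AT AU ini ter c d s t P =
     maxrev_loop (Suc (mT AT P)) (mT AT P)
       (UU AT AU ini ter c d s t P) (LL AT AU ini ter c d s t P) 1 (\<lambda>_. 0) (\<lambda>_. (0, 0))"

definition revenue ::
  "'e set \<Rightarrow> 'e set \<Rightarrow> ('e \<Rightarrow> 'v) \<Rightarrow> ('e \<Rightarrow> 'v) \<Rightarrow> ('e \<Rightarrow> nat) \<Rightarrow> ('e \<Rightarrow> nat) \<Rightarrow> 'v \<Rightarrow> 'v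
    \<Rightarrow> 'e list \<Rightarrow> ereal" where
  "revenue AT AU ini ter c d s t P =
     (\<Sum>k \<in> {1..mT AT P}. fst (maxrev AT AU ini ter c d s t P) k)"

fun record_pairs :: "nat \<Rightarrow> (nat \<Rightarrow> nat \<times> nat) \<Rightarrow> nat \<Rightarrow> (nat \<times> nat) list" where
  "record_pairs 0 pr l = []"
| "record_pairs (Suc f) pr l = (if l = 0 then [] else pr l # record_pairs f pr (fst (pr l)))"

definition partition_pairs ::
  "'e set \<Rightarrow> 'e set \<Rightarrow> ('e \<Rightarrow> 'v) \<Rightarrow> ('e \<Rightarrow> 'v) \<Rightarrow> ('e \<Rightarrow> nat) \<Rightarrow> ('e \<Rightarrow> nat) \<Rightarrow> 'v \<Rightarrow> 'v
    \<Rightarrow> 'e list \<Rightarrow> (nat \<times> nat) list" where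
  "partition_pairs AT AU ini ter c d s t P =
     rev (record_pairs (Suc (mT AT P)) (snd (maxrev AT AU ini ter c d s t P)) (mT AT P))"

text \<open>Position (in the arc list P) where the part of P starting at INIT(tau_j) begins,
 and position (exclusive) where the part of P ending at TERM(tau_i) ends.\<close>
definition seg_start :: "'e set \<Rightarrow> 'e list \<Rightarrow> nat \<Rightarrow> nat" where
  "seg_start AT P j = (if j = Suc (mT AT P) then length P else toll_pos AT P ! (j - 1))"

definition seg_end :: "'e set \<Rightarrow> 'e list \<Rightarrow> nat \<Rightarrow> nat" where
  "seg_end AT P i = (if i = 0 then 0 else Suc (toll_pos AT P ! (i - 1)))"

text \<open>Given pairs (i_1,j_1),...,(i_r,j_r) and the chosen toll-free paths ups i j
 (= upsilon_{i,j}), build the s-t path that follows P from position st up to TERM(tau_{i_1}),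
 uses upsilon_{i_1,j_1}, follows P from INIT(tau_{j_1}) to TERM(tau_{i_2}), ..., and after
 upsilon_{i_r,j_r} follows P from INIT(tau_{j_r}) to t.\<close>
fun splice :: "'e set \<Rightarrow> 'e list \<Rightarrow> (nat \<Rightarrow> nat \<Rightarrow> 'e list) \<Rightarrow> nat \<Rightarrow> (nat \<times> nat) list \<Rightarrow> 'e list" where
  "splice AT P ups st [] = drop st P"
| "splice AT P ups st (ij # ps) =
     drop st (take (seg_end AT P (fst ij)) P) @ ups (fst ij) (snd ij)
     @ splice AT P ups (seg_start AT P (snd ij)) ps"

text \<open>P_1 uses the pairs with odd index h (1-based), P_2 those with even index h.\<close>
definition P1 ::
  "'e set \<Rightarrow> 'e set \<Rightarrow> ('e \<Rightarrow> 'v) \<Rightarrow> ('e \<Rightarrow> 'v) \<Rightarrow> ('e \<Rightarrow> nat) \<Rightarrow> ('e \<Rightarrow> nat) \<Rightarrow> 'v \<Rightarrow> 'v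
    \<Rightarrow> 'e list \<Rightarrow> (nat \<Rightarrow> nat \<Rightarrow> 'e list) \<Rightarrow> 'e list" where
  "P1 AT AU ini ter c d s t P ups =
     (let ps = partition_pairs AT AU ini ter c d s t P
      in splice AT P ups 0 [ps ! h. h \<leftarrow> [0..<length ps], even h])"

definition P2 ::
  "'e set \<Rightarrow> 'e set \<Rightarrow> ('e \<Rightarrow> 'v) \<Rightarrow> ('e \<Rightarrow> 'v) \<Rightarrow> ('e \<Rightarrow> nat) \<Rightarrow> ('e \<Rightarrow> nat) \<Rightarrow> 'v \<Rightarrow> 'v
    \<Rightarrow> 'e list \<Rightarrow> (nat \<Rightarrow> nat \<Rightarrow> 'e list) \<Rightarrow> 'e list" where
  "P2 AT AU ini ter c d s t P ups =
     (let ps = partition_pairs AT AU ini ter c d s t P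
      in splice AT P ups 0 [ps ! h. h \<leftarrow> [0..<length ps], odd h])"

definition upsilon_choice ::
  "'e set \<Rightarrow> 'e set \<Rightarrow> ('e \<Rightarrow> 'v) \<Rightarrow> ('e \<Rightarrow> 'v) \<Rightarrow> ('e \<Rightarrow> nat) \<Rightarrow> ('e \<Rightarrow> nat) \<Rightarrow> 'v \<Rightarrow> 'v
    \<Rightarrow> 'e list \<Rightarrow> (nat \<Rightarrow> nat \<Rightarrow> 'e list) \<Rightarrow> bool" where
  "upsilon_choice AT AU ini ter c d s t P ups \<longleftrightarrow>
     (\<forall>i j. i < j \<and> j \<le> Suc (mT AT P) \<and> UU AT AU ini ter c d s t P i j < \<infinity> \<longrightarrow>
        walk ini ter AU (TERMv AT ter s P i) (ups i j) (INITv AT ini t P j) \<and>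
        ereal (real (plen AT c d (ups i j))) = UU AT AU ini ter c d s t P i j)"

end

theory Submission
  imports Defs
begin


definition HypUL :: "nat \<Rightarrow> (nat \<Rightarrow> nat \<Rightarrow> ereal) \<Rightarrow> (nat \<Rightarrow> nat \<Rightarrow> ereal) \<Rightarrow> bool" where
 "HypUL m U L \<longleftrightarrow> (\<forall>i j. i < j \<and> j \<le> Suc m \<longrightarrow> L i j \<le> U i j \<and> (\<exists>r. L i j = ereal r)) \<and> U 0 (Suc m) \<noteq> \<infinity>"

definition Inv :: "nat \<Rightarrow> (nat \<Rightarrow> nat \<Rightarrow> ereal) \<Rightarrow> (nat \<Rightarrow> nat \<Rightarrow> ereal) \<Rightarrow> nat \<Rightarrow> (nat \<Rightarrow> ereal) \<Rightarrow> (nat \<Rightarrow> nat \<times> nat) \<Rightarrow> bool" where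
 "Inv m U L k tt pr \<longleftrightarrow> 1 \<le> k \<and> k \<le> Suc m \<and>
   (\<forall>x. \<exists>r. tt x = ereal r \<and> 0 \<le> r) \<and> (\<forall>x. k \<le> x \<longrightarrow> tt x = 0) \<and>
   (\<forall>l. 1 \<le> l \<and> l < k \<longrightarrow> fst (pr l) < l \<and> l < snd (pr l) \<and> snd (pr l) \<le> k \<and>
        U (fst (pr l)) (snd (pr l)) = L (fst (pr l)) (snd (pr l)) + (\<Sum>x\<in>{Suc (fst (pr l))..<snd (pr l)}. tt x) \<and>
        (\<forall>x. l < x \<and> x < snd (pr l) \<longrightarrow> tt x = 0) \<and>
        (\<forall>l'. l \<le> l' \<and> l' < snd (pr l) \<longrightarrow> pr l' = pr l)) \<and>
   (\<forall>i j. i < k \<and> k < j \<and> j \<le> Suc m \<longrightarrow> L i j + (\<Sum>x\<in>{Suc i..<k}. tt x) \<le> U i j)"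

lemma sum_fin:
  assumes "\<forall>x. \<exists>r. tt x = ereal r \<and> 0 \<le> r"
  shows "(\<Sum>x\<in>A. tt x) = ereal (\<Sum>x\<in>A. real_of_ereal (tt x))"
proof -
  have "\<And>x. tt x = ereal (real_of_ereal (tt x))" using assms by (metis real_of_ereal.simps(1))
  then have "(\<Sum>x\<in>A. tt x) = (\<Sum>x\<in>A. ereal (real_of_ereal (tt x)))" by (intro sum.cong) auto
  then show ?thesis by (simp only: sum_ereal)
qed

lemma eh1: "(U::ereal) - ereal r - ereal sr = ereal rmn \<Longrightarrow> U = ereal r + (ereal sr + ereal rmn)"
  by (cases U) auto
lemma eh2: "ereal rmn \<le> (U::ereal) - ereal r - ereal sr \<Longrightarrow> ereal r + (ereal sr + ereal rmn) \<le> U"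
  by (cases U) auto
lemma eh3: "ereal r + ereal sr \<le> (U::ereal) \<Longrightarrow> 0 \<le> U - ereal r - ereal sr"
  by (cases U) auto

lemma step:
  assumes H: "HypUL m U L" and I: "Inv m U L k tt pr" and km: "k < Suc m"
  assumes val_def: "val = (\<lambda>ij. U (fst ij) (snd ij) - L (fst ij) (snd ij) - (\<Sum>l\<in>{Suc (fst ij)..<k}. tt l))"
  and S_def: "S = {ij. fst ij < k \<and> k < snd ij \<and> snd ij \<le> Suc m}"
  and mn_def: "mn = Min (val ` S)"
  and best_def: "best = {ij\<in>S. val ij = mn}"
  and jb_def: "jb = Max (snd ` best)"
  and ib_def: "ib = Min {i. (i, jb) \<in> best}"
  and ttp_def: "tt' = (\<lambda>l. if l = k then mn else if k < l \<and> l < jb then 0 else tt l)"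
  and prp_def: "pr' = (\<lambda>l. if k \<le> l \<and> l < jb then (ib, jb) else pr l)"
  shows "k < jb \<and> Inv m U L jb tt' pr'"
proof -
  have k1: "1 \<le> k" using I by (simp add: Inv_def)
  have ttfin: "\<forall>x. \<exists>r. tt x = ereal r \<and> 0 \<le> r" using I by (simp add: Inv_def)
  have ttz: "\<And>x. k \<le> x \<Longrightarrow> tt x = 0" using I by (simp add: Inv_def)
  have Lfin: "\<And>i j. i < j \<Longrightarrow> j \<le> Suc m \<Longrightarrow> \<exists>r. L i j = ereal r" using H by (simp add: HypUL_def)
  have LU: "\<And>i j. i < j \<Longrightarrow> j \<le> Suc m \<Longrightarrow> L i j \<le> U i j" using H by (simp add: HypUL_def)
  have U0: "U 0 (Suc m) \<noteq> \<infinity>" using H by (simp add: HypUL_def)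
  have Iq: "\<And>i j. i < k \<Longrightarrow> k < j \<Longrightarrow> j \<le> Suc m \<Longrightarrow> L i j + (\<Sum>x\<in>{Suc i..<k}. tt x) \<le> U i j"
    using I by (simp add: Inv_def)
  have finS: "finite S"
  proof -
    have "S \<subseteq> {..<k} \<times> {..Suc m}" by (auto simp: S_def)
    then show ?thesis by (rule finite_subset) auto
  qed
  have S0: "(0, Suc m) \<in> S" using k1 km by (auto simp: S_def)
  have valpos: "\<And>ij. ij \<in> S \<Longrightarrow> 0 \<le> val ij"
  proof -
    fix ij assume "ij \<in> S"
    then obtain i j where ij: "ij = (i,j)" "i < k" "k < j" "j \<le> Suc m" by (cases ij) (auto simp: S_def)
    obtain r where r: "L i j = ereal r" using Lfin ij by force
    obtain sr where sr: "(\<Sum>x\<in>{Suc i..<k}. tt x) = ereal sr" using sum_fin[OF ttfin] by blast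
    have "L i j + (\<Sum>x\<in>{Suc i..<k}. tt x) \<le> U i j" using Iq ij by auto
    then show "0 \<le> val ij" unfolding val_def ij using r sr eh3 by simp
  qed
  have mnin: "mn \<in> val ` S" unfolding mn_def using finS S0 by (intro Min_in) auto
  have mnle: "\<And>ij. ij \<in> S \<Longrightarrow> mn \<le> val ij" unfolding mn_def using finS by auto
  have mn0: "0 \<le> mn" using mnin valpos by auto
  have "val (0, Suc m) \<noteq> \<infinity>"
  proof -
    obtain r where r: "L 0 (Suc m) = ereal r" using Lfin by force
    obtain sr where sr: "(\<Sum>x\<in>{Suc 0..<k}. tt x) = ereal sr" using sum_fin[OF ttfin] by blast
    obtain u where "U 0 (Suc m) = ereal u" using U0 LU[of 0 "Suc m"] r by (cases "U 0 (Suc m)") auto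
    then show ?thesis unfolding val_def using r sr by simp
  qed
  then have "mn \<noteq> \<infinity>" using mnle[OF S0] by auto
  then obtain rmn where rmn: "mn = ereal rmn" "0 \<le> rmn" using mn0 by (cases mn) auto
  have finb: "finite best" using finS by (simp add: best_def)
  have bne: "best \<noteq> {}" using mnin by (auto simp: best_def)
  have "jb \<in> snd ` best" unfolding jb_def using finb bne by (intro Max_in) auto
  then obtain i0 where i0: "(i0, jb) \<in> best" by force
  have finI: "finite {i. (i, jb) \<in> best}"
  proof -
    have "{i. (i, jb) \<in> best} \<subseteq> {..<k}" by (auto simp: best_def S_def)
    then show ?thesis by (rule finite_subset) auto
  qed
  have "ib \<in> {i. (i, jb) \<in> best}" unfolding ib_def using finI i0 by (intro Min_in) auto
  then have ibb: "(ib, jb) \<in> best" by simp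
  then have ibk: "ib < k" and kjb: "k < jb" and jbm: "jb \<le> Suc m" and valb: "val (ib, jb) = mn"
    by (auto simp: best_def S_def)
  have tt'fin: "\<forall>x. \<exists>r. tt' x = ereal r \<and> 0 \<le> r"
    using ttfin rmn unfolding ttp_def by auto
  have tt'z: "\<forall>x. jb \<le> x \<longrightarrow> tt' x = 0" using ttz kjb unfolding ttp_def by auto
  have sumlow: "\<And>i. (\<Sum>x\<in>{Suc i..<k}. tt' x) = (\<Sum>x\<in>{Suc i..<k}. tt x)"
    by (rule sum.cong) (auto simp: ttp_def)
  have sumsplit: "\<And>i. i < k \<Longrightarrow> (\<Sum>x\<in>{Suc i..<jb}. tt' x) = (\<Sum>x\<in>{Suc i..<k}. tt x) + mn"
  proof -
    fix i assume ik: "i < k"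
    have "(\<Sum>x\<in>{Suc i..<jb}. tt' x) = (\<Sum>x\<in>{Suc i..<k}. tt' x) + (\<Sum>x\<in>{k..<jb}. tt' x)"
      using ik kjb by (intro sum.atLeastLessThan_concat[symmetric]) auto
    also have "(\<Sum>x\<in>{k..<jb}. tt' x) = tt' k + (\<Sum>x\<in>{Suc k..<jb}. tt' x)"
      using kjb by (rule sum.atLeast_Suc_lessThan)
    also have "(\<Sum>x\<in>{Suc k..<jb}. tt' x) = 0" by (rule sum.neutral) (auto simp: ttp_def)
    finally show "(\<Sum>x\<in>{Suc i..<jb}. tt' x) = (\<Sum>x\<in>{Suc i..<k}. tt x) + mn"
      using sumlow by (simp add: ttp_def)
  qed
  have part4: "\<forall>l. 1 \<le> l \<and> l < jb \<longrightarrow> fst (pr' l) < l \<and> l < snd (pr' l) \<and> snd (pr' l) \<le> jb \<and>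
        U (fst (pr' l)) (snd (pr' l)) = L (fst (pr' l)) (snd (pr' l)) + (\<Sum>x\<in>{Suc (fst (pr' l))..<snd (pr' l)}. tt' x) \<and>
        (\<forall>x. l < x \<and> x < snd (pr' l) \<longrightarrow> tt' x = 0) \<and>
        (\<forall>l'. l \<le> l' \<and> l' < snd (pr' l) \<longrightarrow> pr' l' = pr' l)"
  proof (intro allI impI)
    fix l assume l: "1 \<le> l \<and> l < jb"
    show "fst (pr' l) < l \<and> l < snd (pr' l) \<and> snd (pr' l) \<le> jb \<and>
        U (fst (pr' l)) (snd (pr' l)) = L (fst (pr' l)) (snd (pr' l)) + (\<Sum>x\<in>{Suc (fst (pr' l))..<snd (pr' l)}. tt' x) \<and>
        (\<forall>x. l < x \<and> x < snd (pr' l) \<longrightarrow> tt' x = 0) \<and>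
        (\<forall>l'. l \<le> l' \<and> l' < snd (pr' l) \<longrightarrow> pr' l' = pr' l)"
    proof (cases "l < k")
      case True
      have old: "fst (pr l) < l \<and> l < snd (pr l) \<and> snd (pr l) \<le> k \<and>
        U (fst (pr l)) (snd (pr l)) = L (fst (pr l)) (snd (pr l)) + (\<Sum>x\<in>{Suc (fst (pr l))..<snd (pr l)}. tt x) \<and>
        (\<forall>x. l < x \<and> x < snd (pr l) \<longrightarrow> tt x = 0) \<and>
        (\<forall>l'. l \<le> l' \<and> l' < snd (pr l) \<longrightarrow> pr l' = pr l)"
        using I l True unfolding Inv_def by blast
      have p: "pr' l = pr l" using True by (simp add: prp_def)
      have oA: "snd (pr l) \<le> k" using old by blast
      have oZ: "\<forall>x. l < x \<and> x < snd (pr l) \<longrightarrow> tt x = 0" using old by blast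
      have oB: "\<forall>l'. l \<le> l' \<and> l' < snd (pr l) \<longrightarrow> pr l' = pr l" using old by blast
      have s: "(\<Sum>x\<in>{Suc (fst (pr l))..<snd (pr l)}. tt' x) = (\<Sum>x\<in>{Suc (fst (pr l))..<snd (pr l)}. tt x)"
      proof (rule sum.cong)
        fix x assume "x \<in> {Suc (fst (pr l))..<snd (pr l)}"
        then have "x < k" using oA by simp
        then show "tt' x = tt x" unfolding ttp_def by simp
      qed simp
      have z: "\<forall>x. l < x \<and> x < snd (pr l) \<longrightarrow> tt' x = 0"
      proof (intro allI impI)
        fix x assume "l < x \<and> x < snd (pr l)"
        then have "x < k" "tt x = 0" using oA oZ by auto
        then show "tt' x = 0" unfolding ttp_def by simp
      qed
      have b: "\<forall>l'. l \<le> l' \<and> l' < snd (pr l) \<longrightarrow> pr' l' = pr l"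
      proof (intro allI impI)
        fix l' assume "l \<le> l' \<and> l' < snd (pr l)"
        then have "l' < k" "pr l' = pr l" using oA oB by (linarith, blast)
        then show "pr' l' = pr l" unfolding prp_def by simp
      qed
      have c1: "snd (pr l) \<le> jb" using oA kjb by simp
      have oF: "fst (pr l) < l" using old by blast
      have oL: "l < snd (pr l)" using old by blast
      have oU: "U (fst (pr l)) (snd (pr l)) = L (fst (pr l)) (snd (pr l)) + (\<Sum>x\<in>{Suc (fst (pr l))..<snd (pr l)}. tt x)"
        using old by blast
      show ?thesis unfolding p s using oF oL c1 oU z b by (intro conjI) assumption+
    next
      case False
      have p: "pr' l = (ib, jb)" using False l by (simp add: prp_def)
      obtain r where r: "L ib jb = ereal r" using Lfin ibk kjb jbm by force
      obtain sr where sr: "(\<Sum>x\<in>{Suc ib..<k}. tt x) = ereal sr" using sum_fin[OF ttfin] by blast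
      have "U ib jb - L ib jb - (\<Sum>x\<in>{Suc ib..<k}. tt x) = mn" using valb by (simp add: val_def)
      then have "U ib jb = L ib jb + ((\<Sum>x\<in>{Suc ib..<k}. tt x) + mn)"
        unfolding r sr rmn by (rule eh1)
      then have eq: "U ib jb = L ib jb + (\<Sum>x\<in>{Suc ib..<jb}. tt' x)" using sumsplit[OF ibk] by simp
      have z: "\<forall>x. l < x \<and> x < jb \<longrightarrow> tt' x = 0"
        using False unfolding ttp_def by simp
      have b: "\<forall>l'. l \<le> l' \<and> l' < jb \<longrightarrow> pr' l' = (ib, jb)"
        using False unfolding prp_def by simp
      have c: "ib < l" using False ibk by simp
      show ?thesis unfolding p using c l eq z b p by simp
    qed
  qed
  have part5: "\<forall>i j. i < jb \<and> jb < j \<and> j \<le> Suc m \<longrightarrow> L i j + (\<Sum>x\<in>{Suc i..<jb}. tt' x) \<le> U i j"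
  proof (intro allI impI)
    fix i j assume ij: "i < jb \<and> jb < j \<and> j \<le> Suc m"
    obtain r where r: "L i j = ereal r" using Lfin ij by force
    show "L i j + (\<Sum>x\<in>{Suc i..<jb}. tt' x) \<le> U i j"
    proof (cases "i < k")
      case True
      have inS: "(i, j) \<in> S" using True ij kjb by (auto simp: S_def)
      obtain sr where sr: "(\<Sum>x\<in>{Suc i..<k}. tt x) = ereal sr" using sum_fin[OF ttfin] by blast
      have "mn \<le> U i j - L i j - (\<Sum>x\<in>{Suc i..<k}. tt x)" using mnle[OF inS] by (simp add: val_def)
      then have "L i j + ((\<Sum>x\<in>{Suc i..<k}. tt x) + mn) \<le> U i j"
        unfolding r sr rmn by (rule eh2)
      then show ?thesis using sumsplit[OF True] by simp
    next
      case False
      have "(\<Sum>x\<in>{Suc i..<jb}. tt' x) = 0" using False by (intro sum.neutral) (auto simp: ttp_def)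
      then show ?thesis using LU[of i j] ij by simp
    qed
  qed
  have jb1: "1 \<le> jb" using k1 kjb by simp
  have "Inv m U L jb tt' pr'" unfolding Inv_def
    apply (intro conjI)
    apply (rule jb1)
    apply (rule jbm)
    apply (rule tt'fin)
    apply (rule tt'z)
    apply (rule part4)
    apply (rule part5)
    done
  then show ?thesis using kjb by simp
qed

lemma loop:
  assumes H: "HypUL m U L"
  shows "Inv m U L k tt pr \<Longrightarrow> Suc (Suc m) \<le> f + k \<Longrightarrow>
    Inv m U L (Suc m) (fst (maxrev_loop f m U L k tt pr)) (snd (maxrev_loop f m U L k tt pr))"
proof (induction f arbitrary: k tt pr)
  case 0
  then show ?case by (simp add: Inv_def)
next
  case (Suc f)
  show ?case
  proof (cases "k < Suc m")
    case True
    define val where "val \<equiv> \<lambda>ij. U (fst ij) (snd ij) - L (fst ij) (snd ij) - (\<Sum>l\<in>{Suc (fst ij)..<k}. tt l)"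
    define S where "S \<equiv> {ij. fst ij < k \<and> k < snd ij \<and> snd ij \<le> Suc m}"
    define mn where "mn \<equiv> Min (val ` S)"
    define best where "best \<equiv> {ij\<in>S. val ij = mn}"
    define jb where "jb \<equiv> Max (snd ` best)"
    define ib where "ib \<equiv> Min {i. (i, jb) \<in> best}"
    define tt' where "tt' \<equiv> (\<lambda>l. if l = k then mn else if k < l \<and> l < jb then 0 else tt l)"
    define pr' where "pr' \<equiv> (\<lambda>l. if k \<le> l \<and> l < jb then (ib, jb) else pr l)"
    have st: "k < jb \<and> Inv m U L jb tt' pr'"
      using step[OF H Suc.prems(1) True] unfolding val_def S_def mn_def best_def jb_def ib_def tt'_def pr'_def
      by blast
    have eq: "maxrev_loop (Suc f) m U L k tt pr = maxrev_loop f m U L jb tt' pr'"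
      using True unfolding val_def S_def mn_def best_def jb_def ib_def tt'_def pr'_def
      by (simp add: Let_def)
    show ?thesis unfolding eq using Suc.IH[of jb tt' pr'] st Suc.prems(2) by auto
  next
    case False
    then have "k = Suc m" using Suc.prems(1) by (simp add: Inv_def)
    then show ?thesis using Suc.prems(1) by simp
  qed
qed

lemma loop_main:
  assumes H: "HypUL m U L"
  shows "Inv m U L (Suc m) (fst (maxrev_loop (Suc m) m U L 1 (\<lambda>_. 0) (\<lambda>_. (0, 0))))
                           (snd (maxrev_loop (Suc m) m U L 1 (\<lambda>_. 0) (\<lambda>_. (0, 0))))"
proof (rule loop[OF H])
  show "Inv m U L 1 (\<lambda>_. 0) (\<lambda>_. (0, 0))"
    unfolding Inv_def using H by (auto simp: HypUL_def zero_ereal_def)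
qed simp


definition cntL :: "'e set \<Rightarrow> 'e list \<Rightarrow> nat" where
  "cntL AT xs = length (filter (\<lambda>e. e \<in> AT) xs)"

definition seglen :: "'e set \<Rightarrow> ('e \<Rightarrow> nat) \<Rightarrow> ('e \<Rightarrow> nat) \<Rightarrow> 'e list \<Rightarrow> nat \<Rightarrow> nat \<Rightarrow> nat" where
  "seglen AT c d P i j = plen AT c d (drop (seg_end AT P i) (take (seg_start AT P j) P))"

lemma cntL_append[simp]: "cntL AT (xs @ ys) = cntL AT xs + cntL AT ys"
  by (simp add: cntL_def)

lemma plen_append[simp]: "plen AT c d (xs @ ys) = plen AT c d xs + plen AT c d ys"
  by (simp add: plen_def)

lemma plen_Nil[simp]: "plen AT c d [] = 0" by (simp add: plen_def)
lemma plen_single: "plen AT c d [e] = (if e \<in> AT then c e else d e)" by (simp add: plen_def)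
lemma cntL_Nil[simp]: "cntL AT [] = 0" by (simp add: cntL_def)

lemma take_nth_map: "n \<le> length P \<Longrightarrow> take n P = map (nth P) [0..<n]"
  by (simp add: list_eq_iff_nth_eq)

lemma cntL_take_filter: "n \<le> length P \<Longrightarrow> cntL AT (take n P) = length (filter (\<lambda>i. P ! i \<in> AT) [0..<n])"
  unfolding cntL_def by (simp add: take_nth_map filter_map comp_def)

lemma mT_cntL: "mT AT P = cntL AT P"
proof -
  have "cntL AT (take (length P) P) = length (filter (\<lambda>i. P ! i \<in> AT) [0..<length P])"
    by (rule cntL_take_filter) simp
  then show ?thesis by (simp add: mT_def toll_pos_def)
qed

lemma filter_upt_less: "n \<le> N \<Longrightarrow> filter (\<lambda>i. i < n) (filter Q [0..<N]) = filter Q [0..<n]"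
proof -
  assume nN: "n \<le> N"
  have "[0..<N] = [0..<n] @ [n..<N]" using nN by (metis le0 upt_add_eq_append le_add_diff_inverse)
  then show ?thesis by (simp add: filter_filter conj_commute)
     (smt (verit) atLeastLessThan_iff filter_False filter_cong set_upt)
qed

lemma cnt_take_pos: "n \<le> length P \<Longrightarrow> cntL AT (take n P) = length (filter (\<lambda>i. i < n) (toll_pos AT P))"
proof -
  assume n: "n \<le> length P"
  have A: "cntL AT (take n P) = length (filter (\<lambda>i. P ! i \<in> AT) [0..<n])" by (rule cntL_take_filter[OF n])
  have B: "filter (\<lambda>i. i < n) (toll_pos AT P) = filter (\<lambda>i. P ! i \<in> AT) [0..<n]"
    unfolding toll_pos_def by (rule filter_upt_less[OF n])
  show ?thesis unfolding A B ..
qed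

lemma filter_less_nth: "sorted_wrt (<) xs \<Longrightarrow> k < length xs \<Longrightarrow> filter (\<lambda>i. i < (xs ! k :: nat)) xs = take k xs"
proof (induction xs arbitrary: k)
  case Nil then show ?case by simp
next
  case (Cons x xs)
  show ?case
  proof (cases k)
    case 0
    then show ?thesis using Cons.prems by (auto intro!: filter_False)
  next
    case (Suc k')
    have "x < xs ! k'" using Cons.prems Suc by auto
    then show ?thesis using Cons Suc by simp
  qed
qed

lemma filter_le_nth: "sorted_wrt (<) xs \<Longrightarrow> k < length xs \<Longrightarrow> filter (\<lambda>i. i < Suc (xs ! k :: nat)) xs = take (Suc k) xs"
proof (induction xs arbitrary: k)
  case Nil then show ?case by simp
next
  case (Cons x xs)
  show ?case
  proof (cases k)
    case 0
    then show ?thesis using Cons.prems by (auto intro!: filter_False)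
  next
    case (Suc k')
    have "x < xs ! k'" using Cons.prems Suc by auto
    then have "x < Suc (xs ! k')" by simp
    then show ?thesis using Cons Suc by simp
  qed
qed

lemma pos_sorted: "sorted_wrt (<) (toll_pos AT P)"
  unfolding toll_pos_def by (rule sorted_wrt_filter) (rule sorted_wrt_upt)

lemma pos_len: "length (toll_pos AT P) = mT AT P" by (simp add: mT_def)

lemma pos_mem: "k < mT AT P \<Longrightarrow> toll_pos AT P ! k < length P \<and> P ! (toll_pos AT P ! k) \<in> AT"
proof -
  assume "k < mT AT P"
  then have "toll_pos AT P ! k \<in> set (toll_pos AT P)" by (simp add: mT_def)
  then show ?thesis by (simp add: toll_pos_def)
qed

lemma cnt_pos: "k < mT AT P \<Longrightarrow> cntL AT (take (toll_pos AT P ! k) P) = k"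
  using pos_mem[of k AT P] pos_sorted[of AT P]
  by (simp add: cnt_take_pos filter_less_nth pos_len)

lemma cnt_pos_Suc: "k < mT AT P \<Longrightarrow> cntL AT (take (Suc (toll_pos AT P ! k)) P) = Suc k"
  using pos_mem[of k AT P] pos_sorted[of AT P]
  by (simp add: cnt_take_pos filter_le_nth pos_len Suc_leI)

lemma pos_strict: "k < k' \<Longrightarrow> k' < mT AT P \<Longrightarrow> toll_pos AT P ! k < toll_pos AT P ! k'"
  using pos_sorted[of AT P] by (simp add: sorted_wrt_iff_nth_less pos_len)

lemma se_le: "i \<le> mT AT P \<Longrightarrow> seg_end AT P i \<le> length P"
  using pos_mem[of "i - 1" AT P] by (auto simp: seg_end_def Suc_le_eq)

lemma se_cnt: "i \<le> mT AT P \<Longrightarrow> cntL AT (take (seg_end AT P i) P) = i"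
  using cnt_pos_Suc[of "i - 1" AT P] by (auto simp: seg_end_def)

lemma ss_le: "1 \<le> j \<Longrightarrow> j \<le> Suc (mT AT P) \<Longrightarrow> seg_start AT P j \<le> length P"
proof (cases "j = Suc (mT AT P)")
  case True then show ?thesis by (simp add: seg_start_def)
next
  case False
  assume "1 \<le> j" "j \<le> Suc (mT AT P)"
  then have "j - 1 < mT AT P" using False by arith
  then show ?thesis using pos_mem[of "j - 1" AT P] False by (simp add: seg_start_def)
qed

lemma ss_cnt: "1 \<le> j \<Longrightarrow> j \<le> Suc (mT AT P) \<Longrightarrow> cntL AT (take (seg_start AT P j) P) = j - 1"
  using cnt_pos[of "j - 1" AT P] by (auto simp: seg_start_def mT_cntL)

lemma se_ss: "i < j \<Longrightarrow> j \<le> Suc (mT AT P) \<Longrightarrow> seg_end AT P i \<le> seg_start AT P j"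
  using pos_strict[of "i - 1" "j - 1" AT P] pos_mem[of "i - 1" AT P]
  by (auto simp: seg_end_def seg_start_def Suc_le_eq)

lemma ss_se: "1 \<le> j \<Longrightarrow> j \<le> i \<Longrightarrow> i \<le> mT AT P \<Longrightarrow> seg_start AT P j \<le> seg_end AT P i"
proof -
  assume a: "1 \<le> j" "j \<le> i" "i \<le> mT AT P"
  then have nj: "j \<noteq> Suc (mT AT P)" "i \<noteq> 0" by auto
  have "toll_pos AT P ! (j - 1) \<le> toll_pos AT P ! (i - 1)"
  proof (cases "j = i")
    case True then show ?thesis by simp
  next
    case False
    then have "j - 1 < i - 1" "i - 1 < mT AT P" using a by arith+
    then show ?thesis using pos_strict[of "j - 1" "i - 1" AT P] by simp
  qed
  then show ?thesis using nj by (simp add: seg_end_def seg_start_def)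
qed

lemma se_suc: "1 \<le> j \<Longrightarrow> j \<le> mT AT P \<Longrightarrow> seg_end AT P j = Suc (seg_start AT P j)"
  by (simp add: seg_end_def seg_start_def)

lemma tau_at: "1 \<le> j \<Longrightarrow> j \<le> mT AT P \<Longrightarrow> seg_start AT P j < length P \<and> P ! seg_start AT P j = tau AT P j \<and> tau AT P j \<in> AT"
  using pos_mem[of "j - 1" AT P] by (simp add: seg_start_def tau_def)

lemma take_split: "a \<le> b \<Longrightarrow> take b P = take a P @ drop a (take b P)"
  by (metis append_take_drop_id min.absorb1 take_take)

lemma cnt_seg: "a \<le> b \<Longrightarrow> cntL AT (take a P) + cntL AT (drop a (take b P)) = cntL AT (take b P)"
  by (metis cntL_append take_split)

lemma plen_seg: "a \<le> b \<Longrightarrow> plen AT c d (take a P) + plen AT c d (drop a (take b P)) = plen AT c d (take b P)"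
  by (metis plen_append take_split)

lemma splice_lem:
  assumes "\<forall>p\<in>set sel. fst p < snd p \<and> snd p \<le> Suc (mT AT P) \<and> cntL AT (ups (fst p) (snd p)) = 0"
  and "sorted_wrt (\<lambda>p p'. snd p \<le> fst p') sel"
  and "sel \<noteq> [] \<longrightarrow> st \<le> seg_end AT P (fst (hd sel))" and "st \<le> length P"
  shows "cntL AT (splice AT P ups st sel) + (\<Sum>p\<leftarrow>sel. snd p - Suc (fst p)) + cntL AT (take st P) = mT AT P
   \<and> plen AT c d (splice AT P ups st sel) + (\<Sum>p\<leftarrow>sel. seglen AT c d P (fst p) (snd p)) + plen AT c d (take st P)
       = plen AT c d P + (\<Sum>p\<leftarrow>sel. plen AT c d (ups (fst p) (snd p)))"
  using assms
proof (induction sel arbitrary: st)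
  case Nil
  have "cntL AT (take st P) + cntL AT (drop st P) = cntL AT P" by (metis append_take_drop_id cntL_append)
  moreover have "plen AT c d (take st P) + plen AT c d (drop st P) = plen AT c d P" by (metis append_take_drop_id plen_append)
  ultimately show ?case by (simp add: mT_cntL)
next
  case (Cons p rest)
  obtain i j where p: "p = (i, j)" by (cases p)
  have ij: "i < j" "j \<le> Suc (mT AT P)" "cntL AT (ups i j) = 0" using Cons.prems(1) p by auto
  have rest1: "\<forall>p\<in>set rest. fst p < snd p \<and> snd p \<le> Suc (mT AT P) \<and> cntL AT (ups (fst p) (snd p)) = 0"
    using Cons.prems(1) by auto
  have rest2: "sorted_wrt (\<lambda>p p'. snd p \<le> fst p') rest" using Cons.prems(2) by simp
  have jrest: "\<forall>p'\<in>set rest. j \<le> fst p'" using Cons.prems(2) p by simp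
  have st: "st \<le> seg_end AT P i" using Cons.prems(3) p by simp
  define e where "e = seg_end AT P i"
  define b where "b = seg_start AT P j"
  have im: "i \<le> mT AT P" using ij by simp
  have e_le: "e \<le> length P" using se_le[OF im] by (simp add: e_def)
  have e_cnt: "cntL AT (take e P) = i" using se_cnt[OF im] by (simp add: e_def)
  have j1: "1 \<le> j" using ij by simp
  have b_le: "b \<le> length P" using ss_le[OF j1 ij(2)] by (simp add: b_def)
  have b_cnt: "cntL AT (take b P) = j - 1" using ss_cnt[OF j1 ij(2)] by (simp add: b_def)
  have eb: "e \<le> b" using se_ss[OF ij(1) ij(2)] by (simp add: e_def b_def)
  have rest3: "rest \<noteq> [] \<longrightarrow> b \<le> seg_end AT P (fst (hd rest))"
  proof
    assume rn: "rest \<noteq> []"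
    then have h: "hd rest \<in> set rest" by simp
    then have "j \<le> fst (hd rest)" "fst (hd rest) \<le> mT AT P" using jrest rest1 by fastforce+
    then show "b \<le> seg_end AT P (fst (hd rest))" unfolding b_def using ss_se j1 by blast
  qed
  have IH: "cntL AT (splice AT P ups b rest) + (\<Sum>p\<leftarrow>rest. snd p - Suc (fst p)) + cntL AT (take b P) = mT AT P
   \<and> plen AT c d (splice AT P ups b rest) + (\<Sum>p\<leftarrow>rest. seglen AT c d P (fst p) (snd p)) + plen AT c d (take b P)
       = plen AT c d P + (\<Sum>p\<leftarrow>rest. plen AT c d (ups (fst p) (snd p)))"
    using Cons.IH[OF rest1 rest2 rest3 b_le] .
  have sp: "splice AT P ups st (p # rest) = drop st (take e P) @ ups i j @ splice AT P ups b rest"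
    by (simp add: p e_def b_def)
  have c1: "cntL AT (take st P) + cntL AT (drop st (take e P)) = i" using cnt_seg[OF st, of AT P] e_cnt by (simp add: e_def)
  have p1: "plen AT c d (take st P) + plen AT c d (drop st (take e P)) = plen AT c d (take e P)"
    using plen_seg[OF st, of AT c d P] by (simp add: e_def)
  have p2: "plen AT c d (take e P) + seglen AT c d P i j = plen AT c d (take b P)"
    using plen_seg[OF eb, of AT c d P] by (simp add: seglen_def e_def b_def)
  show ?case unfolding sp using IH c1 p1 p2 ij b_cnt by (simp add: p, arith)
qed


lemma walk_append: "walk ini ter F u (xs @ ys) v \<longleftrightarrow> (\<exists>w. walk ini ter F u xs w \<and> walk ini ter F w ys v)"
  by (induction xs arbitrary: u) auto

definition vtx :: "('e \<Rightarrow> 'v) \<Rightarrow> 'v \<Rightarrow> 'e list \<Rightarrow> nat \<Rightarrow> 'v" where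
  "vtx ter s P n = (if n = 0 then s else ter (P ! (n - 1)))"

lemma walk_take_drop: "walk ini ter F u P v \<Longrightarrow> n \<le> length P \<Longrightarrow>
   walk ini ter F u (take n P) (vtx ter u P n) \<and> walk ini ter F (vtx ter u P n) (drop n P) v"
proof (induction P arbitrary: u n)
  case Nil then show ?case by (simp add: vtx_def)
next
  case (Cons e P)
  show ?case
  proof (cases n)
    case 0 then show ?thesis using Cons.prems by (simp add: vtx_def)
  next
    case (Suc n')
    have w: "e \<in> F" "ini e = u" "walk ini ter F (ter e) P v" using Cons.prems by auto
    have IH: "walk ini ter F (ter e) (take n' P) (vtx ter (ter e) P n') \<and> walk ini ter F (vtx ter (ter e) P n') (drop n' P) v"
      using Cons.IH[OF w(3)] Cons.prems Suc by simp
    have "vtx ter u (e # P) (Suc n') = vtx ter (ter e) P n'" by (cases n') (auto simp: vtx_def)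
    then show ?thesis using IH w Suc by simp
  qed
qed

lemma walk_end: "walk ini ter F u P v \<Longrightarrow> vtx ter u P (length P) = v"
  using walk_take_drop[of ini ter F u P v "length P"] by simp

lemma walk_ini: "walk ini ter F u P v \<Longrightarrow> n < length P \<Longrightarrow> ini (P ! n) = vtx ter u P n"
proof -
  assume w: "walk ini ter F u P v" and n: "n < length P"
  have "walk ini ter F (vtx ter u P n) (drop n P) v" using walk_take_drop[OF w, of n] n by simp
  moreover have "drop n P = P ! n # drop (Suc n) P" using n by (rule Cons_nth_drop_Suc[symmetric])
  ultimately show ?thesis by simp
qed

lemma walk_set: "walk ini ter F u P v \<Longrightarrow> set P \<subseteq> F"
  by (induction P arbitrary: u) auto

lemma walk_mono: "walk ini ter F u P v \<Longrightarrow> set P \<subseteq> G \<Longrightarrow> walk ini ter G u P v"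
  by (induction P arbitrary: u) auto

lemma walk_seg: "walk ini ter F u P v \<Longrightarrow> a \<le> b \<Longrightarrow> b \<le> length P \<Longrightarrow>
   walk ini ter F (vtx ter u P a) (drop a (take b P)) (vtx ter u P b)"
proof -
  assume w: "walk ini ter F u P v" and ab: "a \<le> b" and b: "b \<le> length P"
  have w1: "walk ini ter F u (take b P) (vtx ter u P b)" using walk_take_drop[OF w b] by simp
  have "walk ini ter F (vtx ter u (take b P) a) (drop a (take b P)) (vtx ter u P b)"
    using walk_take_drop[OF w1, of a] ab b by simp
  moreover have "vtx ter u (take b P) a = vtx ter u P a" using ab b by (auto simp: vtx_def)
  ultimately show ?thesis by simp
qed

lemma dist_le: "walk ini ter AU u p v \<Longrightarrow> dist_tf AT ini ter AU c d u v \<le> ereal (real (plen AT c d p))"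
  unfolding dist_tf_def by (rule INF_lower) simp

lemma dist_nonneg: "0 \<le> dist_tf AT ini ter AU c d u v"
  unfolding dist_tf_def by (rule INF_greatest) simp

lemma cntL_zero_set: "cntL AT xs = 0 \<Longrightarrow> \<forall>e\<in>set xs. e \<notin> AT"
  by (simp add: cntL_def filter_empty_conv)

lemma cntL_zero_walk: "walk ini ter AU u p v \<Longrightarrow> AT \<inter> AU = {} \<Longrightarrow> cntL AT p = 0"
  using walk_set[of ini ter AU u p v] by (auto simp: cntL_def filter_empty_conv)

context
  fixes AT AU :: "'e set" and ini ter :: "'e \<Rightarrow> 'v" and c d :: "'e \<Rightarrow> nat" and s t :: 'v and P :: "'e list"
  assumes W: "walk ini ter (AT \<union> AU) s P t" and DJ: "AT \<inter> AU = {}"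
begin

lemma vtx_se: "i \<le> mT AT P \<Longrightarrow> vtx ter s P (seg_end AT P i) = TERMv AT ter s P i"
  by (simp add: vtx_def seg_end_def TERMv_def tau_def)

lemma vtx_ss: "1 \<le> j \<Longrightarrow> j \<le> Suc (mT AT P) \<Longrightarrow> vtx ter s P (seg_start AT P j) = INITv AT ini t P j"
proof (cases "j = Suc (mT AT P)")
  case True then show ?thesis using walk_end[OF W] by (simp add: seg_start_def INITv_def)
next
  case False
  assume j: "1 \<le> j" "j \<le> Suc (mT AT P)"
  then have jm: "j \<le> mT AT P" using False by simp
  have "seg_start AT P j < length P \<and> P ! seg_start AT P j = tau AT P j \<and> tau AT P j \<in> AT"
    by (rule tau_at[OF j(1) jm])
  then show ?thesis using walk_ini[OF W, of "seg_start AT P j"] False by (simp add: INITv_def)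
qed

lemma seg_walk: "i < j \<Longrightarrow> j \<le> Suc (mT AT P) \<Longrightarrow>
  walk ini ter (AT \<union> AU) (TERMv AT ter s P i) (drop (seg_end AT P i) (take (seg_start AT P j) P)) (INITv AT ini t P j)"
proof -
  assume ij: "i < j" "j \<le> Suc (mT AT P)"
  have "walk ini ter (AT \<union> AU) (vtx ter s P (seg_end AT P i)) (drop (seg_end AT P i) (take (seg_start AT P j) P)) (vtx ter s P (seg_start AT P j))"
    using walk_seg[OF W se_ss[OF ij] ss_le[of j AT P]] ij by simp
  then show ?thesis using vtx_se[of i] vtx_ss[of j] ij by simp
qed

lemma seg_tf: "l \<le> mT AT P \<Longrightarrow>
  walk ini ter AU (TERMv AT ter s P l) (drop (seg_end AT P l) (take (seg_start AT P (Suc l)) P)) (INITv AT ini t P (Suc l))"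
proof -
  assume l: "l \<le> mT AT P"
  let ?S = "drop (seg_end AT P l) (take (seg_start AT P (Suc l)) P)"
  have w: "walk ini ter (AT \<union> AU) (TERMv AT ter s P l) ?S (INITv AT ini t P (Suc l))"
    using seg_walk[of l "Suc l"] l by simp
  have "cntL AT (take (seg_end AT P l) P) + cntL AT ?S = cntL AT (take (seg_start AT P (Suc l)) P)"
    by (rule cnt_seg[OF se_ss]) (use l in auto)
  then have "cntL AT ?S = 0" using se_cnt[OF l] ss_cnt[of "Suc l" AT P] l by simp
  then have "\<forall>e\<in>set ?S. e \<notin> AT" by (rule cntL_zero_set)
  moreover have "set ?S \<subseteq> AT \<union> AU" by (rule walk_set[OF w])
  ultimately have "set ?S \<subseteq> AU" by blast
  then show ?thesis using walk_mono[OF w] by blast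
qed

lemma U_le_seg: "l \<le> mT AT P \<Longrightarrow> UU AT AU ini ter c d s t P l (Suc l) \<le> ereal (real (seglen AT c d P l (Suc l)))"
  unfolding UU_def seglen_def by (rule dist_le[OF seg_tf])

lemma U_nonneg: "0 \<le> UU AT AU ini ter c d s t P i j"
  unfolding UU_def by (rule dist_nonneg)

lemma seg_decomp: "i < j \<Longrightarrow> j \<le> mT AT P \<Longrightarrow>
  seglen AT c d P i (Suc j) = seglen AT c d P i j + c (tau AT P j) + seglen AT c d P j (Suc j)"
proof -
  assume ij: "i < j" "j \<le> mT AT P"
  have j1: "1 \<le> j" using ij by simp
  have ta: "seg_start AT P j < length P \<and> P ! seg_start AT P j = tau AT P j \<and> tau AT P j \<in> AT"
    by (rule tau_at[OF j1 ij(2)])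
  have e1: "plen AT c d (take (seg_end AT P i) P) + seglen AT c d P i j = plen AT c d (take (seg_start AT P j) P)"
    unfolding seglen_def by (rule plen_seg[OF se_ss]) (use ij in auto)
  have e2: "plen AT c d (take (seg_end AT P j) P) = plen AT c d (take (seg_start AT P j) P) + c (tau AT P j)"
    using ta se_suc[OF j1 ij(2)] by (simp add: take_Suc_conv_app_nth plen_single)
  have e3: "plen AT c d (take (seg_end AT P j) P) + seglen AT c d P j (Suc j) = plen AT c d (take (seg_start AT P (Suc j)) P)"
    unfolding seglen_def by (rule plen_seg[OF se_ss]) (use ij in auto)
  have e4: "plen AT c d (take (seg_end AT P i) P) + seglen AT c d P i (Suc j) = plen AT c d (take (seg_start AT P (Suc j)) P)"
    unfolding seglen_def by (rule plen_seg[OF se_ss]) (use ij in auto)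
  show ?thesis using e1 e2 e3 e4 by linarith
qed

lemma L_le_seg: "i < j \<Longrightarrow> j \<le> Suc (mT AT P) \<Longrightarrow>
   \<exists>r. LL AT AU ini ter c d s t P i j = ereal r \<and> r \<le> real (seglen AT c d P i j)"
proof (induction j)
  case 0 then show ?case by simp
next
  case (Suc j)
  have Uf: "\<exists>u. UU AT AU ini ter c d s t P j (Suc j) = ereal u \<and> u \<le> real (seglen AT c d P j (Suc j))"
  proof -
    have a: "0 \<le> UU AT AU ini ter c d s t P j (Suc j)" by (rule U_nonneg)
    have b: "UU AT AU ini ter c d s t P j (Suc j) \<le> ereal (real (seglen AT c d P j (Suc j)))"
      using U_le_seg[of j] Suc.prems by simp
    show ?thesis using a b by (cases "UU AT AU ini ter c d s t P j (Suc j)") auto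
  qed
  then obtain u where u: "UU AT AU ini ter c d s t P j (Suc j) = ereal u" "u \<le> real (seglen AT c d P j (Suc j))" by blast
  show ?case
  proof (cases "j = i")
    case True
    have "LL AT AU ini ter c d s t P i (Suc i) = UU AT AU ini ter c d s t P i (Suc i)"
      by (simp add: LL_def)
    then show ?thesis using u True by simp
  next
    case False
    then have ij: "i < j" using Suc.prems by simp
    obtain r where r: "LL AT AU ini ter c d s t P i j = ereal r" "r \<le> real (seglen AT c d P i j)"
      using Suc.IH ij Suc.prems by auto
    have jm: "j \<le> mT AT P" using Suc.prems by simp
    have LLs: "LL AT AU ini ter c d s t P i (Suc j) = LL AT AU ini ter c d s t P i j + UU AT AU ini ter c d s t P j (Suc j) + ereal (real (c (tau AT P j)))"
    proof -
      have s1: "(\<Sum>l\<in>{i..<Suc j}. UU AT AU ini ter c d s t P l (Suc l)) = (\<Sum>l\<in>{i..<j}. UU AT AU ini ter c d s t P l (Suc l)) + UU AT AU ini ter c d s t P j (Suc j)"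
        using ij by (intro sum.atLeastLessThan_Suc) simp
      have s2: "(\<Sum>l\<in>{Suc i..<Suc j}. ereal (real (c (tau AT P l)))) = (\<Sum>l\<in>{Suc i..<j}. ereal (real (c (tau AT P l)))) + ereal (real (c (tau AT P j)))"
        using ij by (intro sum.atLeastLessThan_Suc) simp
      show ?thesis unfolding LL_def s1 s2 by (simp only: ac_simps)
    qed
    have sd: "seglen AT c d P i (Suc j) = seglen AT c d P i j + c (tau AT P j) + seglen AT c d P j (Suc j)"
      by (rule seg_decomp[OF ij jm])
    show ?thesis using LLs r u sd by simp
  qed
qed

lemma valid_seg:
  assumes V: "valid AT AU ini ter c d s t P" and UC: "upsilon_choice AT AU ini ter c d s t P ups"
    and ij: "i < j" "j \<le> Suc (mT AT P)"
  shows "ereal (real (seglen AT c d P i j)) \<le> UU AT AU ini ter c d s t P i j"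
proof (cases "UU AT AU ini ter c d s t P i j = \<infinity>")
  case True then show ?thesis by simp
next
  case False
  then have Ul: "UU AT AU ini ter c d s t P i j < \<infinity>" by (simp add: less_top)
  have uw: "walk ini ter AU (TERMv AT ter s P i) (ups i j) (INITv AT ini t P j)"
    and ul: "ereal (real (plen AT c d (ups i j))) = UU AT AU ini ter c d s t P i j"
    using UC Ul ij unfolding upsilon_choice_def by blast+
  define e where "e = seg_end AT P i"
  define b where "b = seg_start AT P j"
  have im: "i \<le> mT AT P" using ij by simp
  have e_le: "e \<le> length P" using se_le[OF im] by (simp add: e_def)
  have b_le: "b \<le> length P" using ss_le[of j AT P] ij by (simp add: b_def)
  have eb: "e \<le> b" using se_ss[OF ij] by (simp add: e_def b_def)
  let ?F = "AU \<union> (AT \<inter> set P)"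
  have sP: "set P \<subseteq> AT \<union> AU" by (rule walk_set[OF W])
  have w1: "walk ini ter (AT \<union> AU) s (take e P) (TERMv AT ter s P i)"
    using walk_take_drop[OF W e_le] vtx_se[OF im] by (simp add: e_def)
  have w1': "walk ini ter ?F s (take e P) (TERMv AT ter s P i)"
    using sP set_take_subset[of e P] by (intro walk_mono[OF w1]) blast
  have w3: "walk ini ter (AT \<union> AU) (INITv AT ini t P j) (drop b P) t"
    using walk_take_drop[OF W b_le] vtx_ss[of j] ij by (simp add: b_def)
  have w3': "walk ini ter ?F (INITv AT ini t P j) (drop b P) t"
    using sP set_drop_subset[of b P] by (intro walk_mono[OF w3]) blast
  have w2': "walk ini ter ?F (TERMv AT ter s P i) (ups i j) (INITv AT ini t P j)"
    using walk_set[OF uw] by (intro walk_mono[OF uw]) blast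
  have wP': "walk ini ter ?F s (take e P @ ups i j @ drop b P) t"
    using w1' w2' w3' walk_append by metis
  have "plen AT c d P \<le> plen AT c d (take e P @ ups i j @ drop b P)"
    using V wP' unfolding valid_def by blast
  moreover have "plen AT c d (take e P) + seglen AT c d P i j = plen AT c d (take b P)"
    unfolding seglen_def e_def b_def by (rule plen_seg[OF se_ss[OF ij]])
  moreover have "plen AT c d (take b P) + plen AT c d (drop b P) = plen AT c d P"
    by (metis append_take_drop_id plen_append)
  ultimately have "seglen AT c d P i j \<le> plen AT c d (ups i j)" by simp
  then show ?thesis using ul by (metis of_nat_le_iff ereal_less_eq(3))
qed

end


fun rec_ls :: "nat \<Rightarrow> (nat \<Rightarrow> nat \<times> nat) \<Rightarrow> nat \<Rightarrow> nat list" where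
  "rec_ls 0 pr l = []"
| "rec_ls (Suc f) pr l = (if l = 0 then [] else l # rec_ls f pr (fst (pr l)))"

lemma rec_map: "record_pairs f pr l = map pr (rec_ls f pr l)"
  by (induction f arbitrary: l) auto

lemma rec_ls_0: "rec_ls f pr 0 = []" by (cases f) auto

lemma rec_props:
  assumes dec: "\<forall>l. 1 \<le> l \<and> l \<le> m \<longrightarrow> fst (pr l) < l"
  shows "1 \<le> l \<Longrightarrow> l \<le> m \<Longrightarrow> l \<le> f \<Longrightarrow>
    rec_ls f pr l \<noteq> [] \<and> hd (rec_ls f pr l) = l \<and>
    (\<forall>r. Suc r < length (rec_ls f pr l) \<longrightarrow> rec_ls f pr l ! Suc r = fst (pr (rec_ls f pr l ! r))) \<and>
    fst (pr (last (rec_ls f pr l))) = 0 \<and> (\<forall>x\<in>set (rec_ls f pr l). 1 \<le> x \<and> x \<le> l)"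
proof (induction f arbitrary: l)
  case 0 then show ?case by simp
next
  case (Suc f)
  define i where "i = fst (pr l)"
  have il: "i < l" using dec Suc.prems by (simp add: i_def)
  have eq: "rec_ls (Suc f) pr l = l # rec_ls f pr i" using Suc.prems by (simp add: i_def)
  show ?case
  proof (cases "i = 0")
    case True
    then show ?thesis unfolding eq using rec_ls_0[of f pr] Suc.prems by (simp add: i_def)
  next
    case False
    have IH: "rec_ls f pr i \<noteq> [] \<and> hd (rec_ls f pr i) = i \<and>
      (\<forall>r. Suc r < length (rec_ls f pr i) \<longrightarrow> rec_ls f pr i ! Suc r = fst (pr (rec_ls f pr i ! r))) \<and>
      fst (pr (last (rec_ls f pr i))) = 0 \<and> (\<forall>x\<in>set (rec_ls f pr i). 1 \<le> x \<and> x \<le> i)"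
      using Suc.IH[of i] False il Suc.prems by simp
    have A: "\<forall>r. Suc r < length (l # rec_ls f pr i) \<longrightarrow> (l # rec_ls f pr i) ! Suc r = fst (pr ((l # rec_ls f pr i) ! r))"
    proof (intro allI impI)
      fix r assume r: "Suc r < length (l # rec_ls f pr i)"
      show "(l # rec_ls f pr i) ! Suc r = fst (pr ((l # rec_ls f pr i) ! r))"
      proof (cases r)
        case 0
        have "rec_ls f pr i ! 0 = i" using IH hd_conv_nth by metis
        then show ?thesis using 0 by (simp add: i_def)
      next
        case (Suc r') then show ?thesis using IH r by simp
      qed
    qed
    show ?thesis unfolding eq using IH A il Suc.prems by auto
  qed
qed

lemma tele:
  fixes g :: "nat \<Rightarrow> 'a::comm_monoid_add"
  shows "sorted_wrt (<) (a # xs) \<Longrightarrow> xs \<noteq> [] \<Longrightarrow>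
   (\<Sum>h<length xs. (\<Sum>x\<in>{Suc ((a # xs) ! h)..<Suc (xs ! h)}. g x)) = (\<Sum>x\<in>{Suc a..<Suc (last xs)}. g x)"
proof (induction xs arbitrary: a)
  case Nil then show ?case by simp
next
  case (Cons y ys)
  show ?case
  proof (cases "ys = []")
    case True then show ?thesis by simp
  next
    case False
    have ay: "a < y" using Cons.prems by simp
    have s: "sorted_wrt (<) (y # ys)" using Cons.prems by simp
    have ly: "y < last ys" using s False by simp
    have "(\<Sum>h<length (y # ys). (\<Sum>x\<in>{Suc ((a # y # ys) ! h)..<Suc ((y # ys) ! h)}. g x))
       = (\<Sum>x\<in>{Suc a..<Suc y}. g x) + (\<Sum>h<length ys. (\<Sum>x\<in>{Suc ((y # ys) ! h)..<Suc (ys ! h)}. g x))"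
      by (simp only: length_Cons sum.lessThan_Suc_shift nth_Cons_0 nth_Cons_Suc)
    also have "(\<Sum>h<length ys. (\<Sum>x\<in>{Suc ((y # ys) ! h)..<Suc (ys ! h)}. g x)) = (\<Sum>x\<in>{Suc y..<Suc (last ys)}. g x)"
      using Cons.IH[OF s False] .
    also have "(\<Sum>x\<in>{Suc a..<Suc y}. g x) + (\<Sum>x\<in>{Suc y..<Suc (last ys)}. g x) = (\<Sum>x\<in>{Suc a..<Suc (last ys)}. g x)"
      using ay ly by (intro sum.atLeastLessThan_concat) auto
    finally show ?thesis using False by simp
  qed
qed

lemma alpha_0: "alpha 0 = 1" by (subst alpha.simps) simp
lemma alpha_1: "alpha 1 = 1" by (subst alpha.simps) simp

lemma alpha_fin: "finite {ij::nat\<times>nat. 0 < fst ij \<and> fst ij \<le> snd ij \<and> snd ij < k \<and> fst ij + snd ij \<le> k}"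
proof -
  have "{ij::nat\<times>nat. 0 < fst ij \<and> fst ij \<le> snd ij \<and> snd ij < k \<and> fst ij + snd ij \<le> k} \<subseteq> {..<k} \<times> {..<k}"
    by auto
  then show ?thesis by (rule finite_subset) auto
qed

lemma alpha_ge_pair: "2 \<le> k \<Longrightarrow> 0 < i \<Longrightarrow> i \<le> j \<Longrightarrow> j < k \<Longrightarrow> i + j \<le> k \<Longrightarrow> 1 + alpha i + alpha j \<le> 2 * alpha k"
proof -
  assume a: "2 \<le> k" "0 < i" "i \<le> j" "j < k" "i + j \<le> k"
  let ?S = "{ij::nat\<times>nat. 0 < fst ij \<and> fst ij \<le> snd ij \<and> snd ij < k \<and> fst ij + snd ij \<le> k}"
  have "alpha k = (1/2) * Max ((\<lambda>ij. 1 + alpha (fst ij) + alpha (snd ij)) ` ?S)"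
    using a by (subst alpha.simps) simp
  moreover have "1 + alpha i + alpha j \<le> Max ((\<lambda>ij. 1 + alpha (fst ij) + alpha (snd ij)) ` ?S)"
  proof (rule Max_ge)
    show "finite ((\<lambda>ij. 1 + alpha (fst ij) + alpha (snd ij)) ` ?S)" using alpha_fin by simp
    show "1 + alpha i + alpha j \<in> (\<lambda>ij. 1 + alpha (fst ij) + alpha (snd ij)) ` ?S"
      using a by (intro image_eqI[of _ _ "(i, j)"]) auto
  qed
  ultimately show ?thesis by simp
qed

lemma alpha_ge1: "1 \<le> alpha k"
proof (induction k rule: less_induct)
  case (less k)
  show ?case
  proof (cases "k \<le> 1")
    case True then show ?thesis by (subst alpha.simps) simp
  next
    case False
    then have "1 + alpha 1 + alpha 1 \<le> 2 * alpha k" by (intro alpha_ge_pair) auto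
    then show ?thesis using alpha_1 by simp
  qed
qed

lemma alpha_comb: "2 \<le> k \<Longrightarrow> a < k \<Longrightarrow> b < k \<Longrightarrow> a + b \<le> k \<Longrightarrow> 1 + alpha a + alpha b \<le> 2 * alpha k"
proof -
  assume k: "2 \<le> k" and ab: "a < k" "b < k" "a + b \<le> k"
  define a' where "a' = max 1 a"
  define b' where "b' = max 1 b"
  have aa: "alpha a = alpha a'" unfolding a'_def using alpha_0 alpha_1 by (cases "a = 0") (auto simp: max_def)
  have bb: "alpha b = alpha b'" unfolding b'_def using alpha_0 alpha_1 by (cases "b = 0") (auto simp: max_def)
  have c: "0 < a'" "0 < b'" "a' < k" "b' < k" "a' + b' \<le> k" using k ab unfolding a'_def b'_def by auto
  show ?thesis
  proof (cases "a' \<le> b'")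
    case True
    then show ?thesis using alpha_ge_pair[of k a' b'] c k aa bb by simp
  next
    case False
    then show ?thesis using alpha_ge_pair[of k b' a'] c k aa bb by simp
  qed
qed


lemma comp_filter: "[f h. h \<leftarrow> ys, P h] = map f (filter P ys)"
  by (induction ys) auto

lemma split_sel:
  fixes f :: "'a \<Rightarrow> 'b::comm_monoid_add"
  shows "(\<Sum>p\<leftarrow>[xs ! h. h \<leftarrow> [0..<length xs], Pp h]. f p) = (\<Sum>h\<in>{h. h < length xs \<and> Pp h}. f (xs ! h))"
proof -
  have "[xs ! h. h \<leftarrow> [0..<length xs], Pp h] = map (\<lambda>h. xs ! h) (filter Pp [0..<length xs])"
    by (rule comp_filter)
  then have "(\<Sum>p\<leftarrow>[xs ! h. h \<leftarrow> [0..<length xs], Pp h]. f p) = (\<Sum>h\<leftarrow>filter Pp [0..<length xs]. f (xs ! h))"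
    by (simp add: comp_def)
  also have "\<dots> = (\<Sum>h\<in>set (filter Pp [0..<length xs]). f (xs ! h))"
    by (rule sum_list_distinct_conv_sum_set) simp
  also have "set (filter Pp [0..<length xs]) = {h. h < length xs \<and> Pp h}" by auto
  finally show ?thesis .
qed

lemma final_real:
  fixes a a1 a2 Bp B1 B2 D1 D2 :: real
  assumes "1 \<le> a1" "1 \<le> a2" "1 \<le> a" "1 + a1 + a2 \<le> 2*a" "Bp - D1 \<le> B1" "Bp - D2 \<le> B2"
    "D1 + D2 < Bp / a" "0 \<le> D1 + D2"
  shows "Bp / a \<le> B1 / a1 \<or> Bp / a \<le> B2 / a2"
proof (rule ccontr)
  assume "\<not> ?thesis"
  then have h1: "B1 / a1 < Bp / a" and h2: "B2 / a2 < Bp / a" by auto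
  define K where "K = Bp / a"
  have Kp: "0 < K" using assms(7,8) by (simp add: K_def)
  have aK: "a * K = Bp" using assms(3) by (simp add: K_def)
  have "B1 < a1 * K" using h1 assms(1) by (simp add: K_def divide_less_eq mult.commute)
  moreover have "B2 < a2 * K" using h2 assms(2) by (simp add: K_def divide_less_eq mult.commute)
  moreover have "(a1 + a2) * K \<le> (2 * a - 1) * K" using assms(4) Kp by (intro mult_right_mono) auto
  ultimately have "B1 + B2 < 2 * Bp - K" using aK by (simp add: algebra_simps)
  then show False using assms(5,6,7) K_def by linarith
qed


theorem theorem6:
  fixes V :: "'v set" and AT AU :: "'e set" and ini ter :: "'e \<Rightarrow> 'v"
    and c d :: "'e \<Rightarrow> nat" and s t :: 'v and P :: "'e list"
    and ups :: "nat \<Rightarrow> nat \<Rightarrow> 'e list"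
  assumes "toll_network V AT AU ini ter s t"
    and "\<exists>p. walk ini ter AU s p t"
    and "valid AT AU ini ter c d s t P"
    and "upsilon_choice AT AU ini ter c d s t P ups"
    and "revenue AT AU ini ter c d s t P
           < ereal (1 / alpha (mT AT P)) * BB AT AU ini ter c d s t P"
  shows "\<exists>P' \<in> {P1 AT AU ini ter c d s t P ups, P2 AT AU ini ter c d s t P ups}.
           ereal (1 / alpha (mT AT P')) * BB AT AU ini ter c d s t P'
             \<ge> ereal (1 / alpha (mT AT P)) * BB AT AU ini ter c d s t P"
proof -
  note TN = assms(1) and VA = assms(3) and UC = assms(4) and REV = assms(5)
  define m where "m = mT AT P"
  define U where "U = UU AT AU ini ter c d s t P"
  define L where "L = LL AT AU ini ter c d s t P"
  have DJ: "AT \<inter> AU = {}" using TN by (simp add: toll_network_def)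
  have W: "walk ini ter (AT \<union> AU) s P t" using VA by (simp add: valid_def)
  have m1: "1 \<le> m" using VA by (simp add: valid_def m_def)
  obtain p0 where p0: "walk ini ter AU s p0 t" using assms(2) by blast
  have Linf_fin: "\<exists>lr. Linf AT AU ini ter c d s t = ereal lr"
  proof -
    have a: "Linf AT AU ini ter c d s t \<le> ereal (real (plen AT c d p0))"
      unfolding Linf_def by (rule dist_le[OF p0])
    have b: "0 \<le> Linf AT AU ini ter c d s t" unfolding Linf_def by (rule dist_nonneg)
    show ?thesis using a b by (cases "Linf AT AU ini ter c d s t") auto
  qed
  then obtain lr where lr: "Linf AT AU ini ter c d s t = ereal lr" by blast
  have U0: "U 0 (Suc m) = Linf AT AU ini ter c d s t"
    by (simp add: U_def UU_def Linf_def TERMv_def INITv_def m_def)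
  have LUf: "\<And>i j. i < j \<Longrightarrow> j \<le> Suc m \<Longrightarrow> (\<exists>r. L i j = ereal r \<and> r \<le> real (seglen AT c d P i j)) \<and> ereal (real (seglen AT c d P i j)) \<le> U i j"
  proof -
    fix i j assume ij: "i < j" "j \<le> Suc m"
    have "\<exists>r. LL AT AU ini ter c d s t P i j = ereal r \<and> r \<le> real (seglen AT c d P i j)"
      by (rule L_le_seg[OF W DJ]) (use ij in \<open>auto simp: m_def\<close>)
    moreover have "ereal (real (seglen AT c d P i j)) \<le> U i j"
      using valid_seg[OF W DJ VA UC] ij unfolding U_def m_def by blast
    ultimately show "(\<exists>r. L i j = ereal r \<and> r \<le> real (seglen AT c d P i j)) \<and> ereal (real (seglen AT c d P i j)) \<le> U i j"
      unfolding L_def by blast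
  qed
  have HUL: "HypUL m U L"
    unfolding HypUL_def
  proof (intro conjI allI impI)
    fix i j assume ij: "i < j \<and> j \<le> Suc m"
    then obtain r where r: "L i j = ereal r" "r \<le> real (seglen AT c d P i j)" and su: "ereal (real (seglen AT c d P i j)) \<le> U i j"
      using LUf by blast
    show "L i j \<le> U i j" using r su by (metis ereal_less_eq(3) order_trans)
    show "\<exists>r. L i j = ereal r" using r by blast
  next
    show "U 0 (Suc m) \<noteq> \<infinity>" using U0 lr by simp
  qed
  define tt where "tt = fst (maxrev AT AU ini ter c d s t P)"
  define pr where "pr = snd (maxrev AT AU ini ter c d s t P)"
  have mr: "maxrev AT AU ini ter c d s t P = maxrev_loop (Suc m) m U L 1 (\<lambda>_. 0) (\<lambda>_. (0, 0))"
    by (simp add: maxrev_def m_def U_def L_def)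
  have INV: "Inv m U L (Suc m) tt pr"
    using loop_main[OF HUL] unfolding tt_def pr_def mr .
  have ttf: "\<forall>x. \<exists>r. tt x = ereal r \<and> 0 \<le> r" using INV by (simp add: Inv_def)
  define tr where "tr x = real_of_ereal (tt x)" for x
  have ttr: "\<And>x. tt x = ereal (tr x)" using ttf unfolding tr_def by (metis real_of_ereal.simps(1))
  have trnn: "\<And>x. 0 \<le> tr x" using ttf unfolding tr_def by (metis real_of_ereal.simps(1))
  have Blk: "\<forall>l. 1 \<le> l \<and> l < Suc m \<longrightarrow> fst (pr l) < l \<and> l < snd (pr l) \<and> snd (pr l) \<le> Suc m \<and>
        U (fst (pr l)) (snd (pr l)) = L (fst (pr l)) (snd (pr l)) + (\<Sum>x\<in>{Suc (fst (pr l))..<snd (pr l)}. tt x) \<and>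
        (\<forall>x. l < x \<and> x < snd (pr l) \<longrightarrow> tt x = 0) \<and>
        (\<forall>l'. l \<le> l' \<and> l' < snd (pr l) \<longrightarrow> pr l' = pr l)"
    using INV unfolding Inv_def by blast
  have revV: "revenue AT AU ini ter c d s t P = ereal (\<Sum>k\<in>{1..m}. tr k)"
  proof -
    have "revenue AT AU ini ter c d s t P = (\<Sum>k\<in>{1..m}. tt k)"
      by (simp add: revenue_def tt_def m_def)
    also have "\<dots> = (\<Sum>k\<in>{1..m}. ereal (tr k))" by (simp add: ttr)
    also have "\<dots> = ereal (\<Sum>k\<in>{1..m}. tr k)" by (rule sum_ereal)
    finally show ?thesis .
  qed
  define ls where "ls = rec_ls (Suc m) pr m"
  have dec: "\<forall>l. 1 \<le> l \<and> l \<le> m \<longrightarrow> fst (pr l) < l" using Blk by auto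
  have RP: "ls \<noteq> [] \<and> hd ls = m \<and>
    (\<forall>r. Suc r < length ls \<longrightarrow> ls ! Suc r = fst (pr (ls ! r))) \<and>
    fst (pr (last ls)) = 0 \<and> (\<forall>x\<in>set ls. 1 \<le> x \<and> x \<le> m)"
    unfolding ls_def using rec_props[OF dec, of m "Suc m"] m1 by simp
  define ns where "ns = rev ls"
  define q where "q = length ns"
  have PP: "partition_pairs AT AU ini ter c d s t P = map pr ns"
    by (simp add: partition_pairs_def pr_def m_def rec_map ns_def ls_def rev_map)
  have q1: "1 \<le> q" using RP by (simp add: q_def ns_def Suc_le_eq)
  have nsr: "\<And>h. h < q \<Longrightarrow> 1 \<le> ns ! h \<and> ns ! h \<le> m"
    using RP unfolding q_def ns_def by (metis nth_mem set_rev)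
  have N2: "fst (pr (ns ! 0)) = 0"
  proof -
    have "ns \<noteq> []" using RP by (simp add: ns_def)
    then have "ns ! 0 = last ls" by (metis hd_conv_nth hd_rev ns_def)
    then show ?thesis using RP by simp
  qed
  have N3: "\<And>h. Suc h < q \<Longrightarrow> fst (pr (ns ! Suc h)) = ns ! h"
  proof -
    fix h assume h: "Suc h < q"
    define r where "r = length ls - Suc (Suc h)"
    have lq: "length ls = q" by (simp add: q_def ns_def)
    have a: "ns ! Suc h = ls ! r" using h lq by (simp add: ns_def rev_nth r_def)
    have b: "ns ! h = ls ! Suc r" using h lq by (simp add: ns_def rev_nth r_def Suc_diff_Suc)
    have "Suc r < length ls" using h lq by (simp add: r_def)
    then show "fst (pr (ns ! Suc h)) = ns ! h" using RP a b by simp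
  qed
  have Nlast: "ns ! (q - 1) = m"
  proof -
    have "ns \<noteq> []" using RP by (simp add: ns_def)
    then have "ns ! (q - 1) = hd ls" unfolding q_def by (metis last_conv_nth last_rev ns_def)
    then show ?thesis using RP by simp
  qed
  define I where "I h = fst (pr (ns ! h))" for h
  define J where "J h = snd (pr (ns ! h))" for h
  have BH: "\<And>h. h < q \<Longrightarrow> I h < ns ! h \<and> ns ! h < J h \<and> J h \<le> Suc m \<and>
        U (I h) (J h) = L (I h) (J h) + (\<Sum>x\<in>{Suc (I h)..<J h}. tt x) \<and>
        (\<forall>x. ns ! h < x \<and> x < J h \<longrightarrow> tt x = 0) \<and> (\<forall>l'. ns ! h \<le> l' \<and> l' < J h \<longrightarrow> pr l' = pr (ns ! h))"
  proof -
    fix h assume h: "h < q"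
    have "1 \<le> ns ! h \<and> ns ! h < Suc m" using nsr[OF h] by simp
    then show "I h < ns ! h \<and> ns ! h < J h \<and> J h \<le> Suc m \<and>
        U (I h) (J h) = L (I h) (J h) + (\<Sum>x\<in>{Suc (I h)..<J h}. tt x) \<and>
        (\<forall>x. ns ! h < x \<and> x < J h \<longrightarrow> tt x = 0) \<and> (\<forall>l'. ns ! h \<le> l' \<and> l' < J h \<longrightarrow> pr l' = pr (ns ! h))"
      using Blk[rule_format, of "ns ! h"] unfolding I_def J_def by blast
  qed
  have Ieq: "\<And>h. h < q \<Longrightarrow> I h = (0 # ns) ! h"
  proof -
    fix h assume h: "h < q"
    show "I h = (0 # ns) ! h"
    proof (cases h)
      case 0 then show ?thesis using N2 by (simp add: I_def)
    next
      case (Suc h') then show ?thesis using N3[of h'] h by (simp add: I_def)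
    qed
  qed
  have sorted0: "sorted_wrt (<) (0 # ns)"
  proof -
    have "\<forall>i. Suc i < length (0 # ns) \<longrightarrow> (0 # ns) ! i < (0 # ns) ! Suc i"
    proof (intro allI impI)
      fix i assume i: "Suc i < length (0 # ns)"
      show "(0 # ns) ! i < (0 # ns) ! Suc i"
      proof (cases i)
        case 0 then show ?thesis using nsr[of 0] q1 by simp
      next
        case (Suc i')
        have "Suc i' < q" using i Suc by (simp add: q_def)
        moreover have "I (Suc i') < ns ! Suc i'" using BH[of "Suc i'"] \<open>Suc i' < q\<close> by blast
        ultimately have "ns ! i' < ns ! Suc i'" using N3[of i'] by (simp add: I_def)
        then show ?thesis using Suc by simp
      qed
    qed
    then show ?thesis by (subst sorted_wrt_iff_nth_Suc_transp) (auto simp: transp_def)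
  qed
  have C5: "\<And>h. Suc h < q \<Longrightarrow> J h \<le> ns ! Suc h"
  proof (rule ccontr)
    fix h assume h: "Suc h < q" and nc: "\<not> J h \<le> ns ! Suc h"
    have hq: "h < q" using h by simp
    have "I (Suc h) < ns ! Suc h" using BH[OF h] by blast
    then have lt: "ns ! h < ns ! Suc h" using N3[OF h] by (simp add: I_def)
    have blk: "\<forall>l'. ns ! h \<le> l' \<and> l' < J h \<longrightarrow> pr l' = pr (ns ! h)" using BH[OF hq] by blast
    have "ns ! h \<le> ns ! Suc h \<and> ns ! Suc h < J h" using lt nc by simp
    then have "pr (ns ! Suc h) = pr (ns ! h)" using blk by blast
    then have "ns ! h = I h" using N3[OF h] by (simp add: I_def)
    moreover have "I h < ns ! h" using BH[OF hq] by blast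
    ultimately show False by simp
  qed
  have Imono: "\<And>h h'. h \<le> h' \<Longrightarrow> h' < q \<Longrightarrow> I h \<le> I h'"
  proof -
    fix h h' assume hh: "h \<le> h'" "h' < q"
    show "I h \<le> I h'"
    proof (cases "h = h'")
      case True then show ?thesis by simp
    next
      case False
      then have "(0 # ns) ! h < (0 # ns) ! h'" using sorted0 hh
        by (subst (asm) sorted_wrt_iff_nth_less) (auto simp: q_def)
      then show ?thesis using Ieq hh by simp
    qed
  qed
  have sep: "\<And>h h'. h < h' \<Longrightarrow> h' < q \<Longrightarrow> even h = even h' \<Longrightarrow> J h \<le> I h'"
  proof -
    fix h h' assume hh: "h < h'" "h' < q" "even h = even h'"
    have h2: "Suc (Suc h) \<le> h'" using hh by presburger
    have "J h \<le> ns ! Suc h" using C5[of h] hh h2 by simp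
    also have "ns ! Suc h = I (Suc (Suc h))" using Ieq[of "Suc (Suc h)"] hh h2 by simp
    also have "\<dots> \<le> I h'" using Imono h2 hh by simp
    finally show "J h \<le> I h'" .
  qed
  define D where "D h = (\<Sum>x\<in>{Suc (I h)..<J h}. tr x)" for h
  have nsne: "ns \<noteq> []" using q1 by (auto simp: q_def)
  have lastns: "last ns = m" using Nlast nsne by (simp add: last_conv_nth q_def)
  have Dsum: "(\<Sum>h<q. D h) = (\<Sum>k\<in>{1..m}. tr k)"
  proof -
    have "\<And>h. h < q \<Longrightarrow> D h = (\<Sum>x\<in>{Suc ((0 # ns) ! h)..<Suc (ns ! h)}. tr x)"
    proof -
      fix h assume h: "h < q"
      have b: "I h < ns ! h" "ns ! h < J h" "\<forall>x. ns ! h < x \<and> x < J h \<longrightarrow> tt x = 0" using BH[OF h] by blast+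
      have "D h = (\<Sum>x\<in>{Suc (I h)..<Suc (ns ! h)}. tr x) + (\<Sum>x\<in>{Suc (ns ! h)..<J h}. tr x)"
        unfolding D_def using b by (intro sum.atLeastLessThan_concat[symmetric]) auto
      also have "(\<Sum>x\<in>{Suc (ns ! h)..<J h}. tr x) = 0"
        using b(3) by (intro sum.neutral) (auto simp: tr_def)
      finally show "D h = (\<Sum>x\<in>{Suc ((0 # ns) ! h)..<Suc (ns ! h)}. tr x)" using Ieq[OF h] by simp
    qed
    then have "(\<Sum>h<q. D h) = (\<Sum>h<length ns. (\<Sum>x\<in>{Suc ((0 # ns) ! h)..<Suc (ns ! h)}. tr x))"
      by (simp add: q_def)
    also have "\<dots> = (\<Sum>x\<in>{Suc 0..<Suc (last ns)}. tr x)" by (rule tele[OF sorted0 nsne])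
    finally show ?thesis using lastns by (simp add: atLeastLessThanSuc_atLeastAtMost)
  qed
  have Cover: "m \<le> (\<Sum>h<q. J h - Suc (I h))"
  proof -
    have "(\<Sum>h<length ns. (\<Sum>x\<in>{Suc ((0 # ns) ! h)..<Suc (ns ! h)}. (1::nat))) = (\<Sum>x\<in>{Suc 0..<Suc (last ns)}. (1::nat))"
      by (rule tele[OF sorted0 nsne])
    then have e: "(\<Sum>h<q. (\<Sum>x\<in>{Suc ((0 # ns) ! h)..<Suc (ns ! h)}. (1::nat))) = m"
      using lastns by (simp add: q_def)
    have "(\<Sum>h<q. (\<Sum>x\<in>{Suc ((0 # ns) ! h)..<Suc (ns ! h)}. (1::nat))) \<le> (\<Sum>h<q. J h - Suc (I h))"
    proof (rule sum_mono)
      fix h assume "h \<in> {..<q}"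
      then have h: "h < q" by simp
      have "(\<Sum>x\<in>{Suc ((0 # ns) ! h)..<Suc (ns ! h)}. (1::nat)) = Suc (ns ! h) - Suc (I h)"
        using Ieq[OF h] by simp
      moreover have "ns ! h < J h" using BH[OF h] by blast
      ultimately show "(\<Sum>x\<in>{Suc ((0 # ns) ! h)..<Suc (ns ! h)}. (1::nat)) \<le> J h - Suc (I h)"
        by simp
    qed
    then show ?thesis using e by simp
  qed
  define ps where "ps = map pr ns"
  have lps: "length ps = q" by (simp add: ps_def q_def)
  have psh: "\<And>h. h < q \<Longrightarrow> ps ! h = (I h, J h)" by (simp add: ps_def I_def J_def q_def)
  have IJ: "\<And>h. h < q \<Longrightarrow> I h < J h \<and> J h \<le> Suc m \<and> Suc (I h) < J h"
  proof -
    fix h assume h: "h < q"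
    have "I h < ns ! h" "ns ! h < J h" "J h \<le> Suc m" using BH[OF h] by blast+
    then show "I h < J h \<and> J h \<le> Suc m \<and> Suc (I h) < J h" by simp
  qed
  have UPh: "\<And>h. h < q \<Longrightarrow> cntL AT (ups (I h) (J h)) = 0 \<and>
      real (plen AT c d (ups (I h) (J h))) \<le> real (seglen AT c d P (I h) (J h)) + D h"
  proof -
    fix h assume h: "h < q"
    have b: "I h < J h" "J h \<le> Suc m" using IJ[OF h] by auto
    have bU: "U (I h) (J h) = L (I h) (J h) + (\<Sum>x\<in>{Suc (I h)..<J h}. tt x)" using BH[OF h] by blast
    obtain r where r: "L (I h) (J h) = ereal r" "r \<le> real (seglen AT c d P (I h) (J h))"
      using LUf[OF b] by blast
    have sD: "(\<Sum>x\<in>{Suc (I h)..<J h}. tt x) = ereal (D h)"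
      unfolding D_def ttr by (rule sum_ereal)
    have Ueq: "U (I h) (J h) = ereal (r + D h)" using bU r sD by simp
    then have "UU AT AU ini ter c d s t P (I h) (J h) < \<infinity>" by (simp add: U_def)
    then have w: "walk ini ter AU (TERMv AT ter s P (I h)) (ups (I h) (J h)) (INITv AT ini t P (J h))"
      and pl: "ereal (real (plen AT c d (ups (I h) (J h)))) = UU AT AU ini ter c d s t P (I h) (J h)"
      using UC b unfolding upsilon_choice_def m_def by blast+
    have "real (plen AT c d (ups (I h) (J h))) = r + D h" using pl Ueq by (simp add: U_def)
    then show "cntL AT (ups (I h) (J h)) = 0 \<and>
      real (plen AT c d (ups (I h) (J h))) \<le> real (seglen AT c d P (I h) (J h)) + D h"
      using cntL_zero_walk[OF w DJ] r by simp
  qed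
  have GEN: "\<And>Pp. (\<forall>h h'. h < h' \<longrightarrow> Pp h \<longrightarrow> Pp h' \<longrightarrow> even h = even h') \<Longrightarrow>
     cntL AT (splice AT P ups 0 [ps ! h. h \<leftarrow> [0..<length ps], Pp h]) + (\<Sum>h\<in>{h. h < q \<and> Pp h}. J h - Suc (I h)) = m \<and>
     real (plen AT c d (splice AT P ups 0 [ps ! h. h \<leftarrow> [0..<length ps], Pp h])) \<le> real (plen AT c d P) + (\<Sum>h\<in>{h. h < q \<and> Pp h}. D h)"
  proof -
    fix Pp :: "nat \<Rightarrow> bool" assume par: "\<forall>h h'. h < h' \<longrightarrow> Pp h \<longrightarrow> Pp h' \<longrightarrow> even h = even h'"
    define sel where "sel = [ps ! h. h \<leftarrow> [0..<length ps], Pp h]"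
    have selm: "sel = map (\<lambda>h. ps ! h) (filter Pp [0..<q])" by (simp add: sel_def comp_filter lps)
    have c1: "\<forall>p\<in>set sel. fst p < snd p \<and> snd p \<le> Suc (mT AT P) \<and> cntL AT (ups (fst p) (snd p)) = 0"
    proof
      fix p assume "p \<in> set sel"
      then obtain h where h: "h < q" "p = ps ! h" by (auto simp: selm)
      then show "fst p < snd p \<and> snd p \<le> Suc (mT AT P) \<and> cntL AT (ups (fst p) (snd p)) = 0"
        using psh[OF h(1)] IJ[OF h(1)] UPh[OF h(1)] by (simp add: m_def)
    qed
    have c2: "sorted_wrt (\<lambda>p p'. snd p \<le> fst p') sel"
    proof -
      have "sorted_wrt (<) (filter Pp [0..<q])" by (rule sorted_wrt_filter[OF sorted_wrt_upt])
      then have "sorted_wrt (\<lambda>h h'. snd (ps ! h) \<le> fst (ps ! h')) (filter Pp [0..<q])"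
      proof (rule sorted_wrt_mono_rel[rotated])
        fix h h' assume "h \<in> set (filter Pp [0..<q])" "h' \<in> set (filter Pp [0..<q])" "h < h'"
        then have hh: "h < h'" "h' < q" "Pp h" "Pp h'" by auto
        then have "J h \<le> I h'" using sep par by blast
        then show "snd (ps ! h) \<le> fst (ps ! h')" using psh hh by simp
      qed
      then show ?thesis unfolding selm by (simp add: sorted_wrt_map)
    qed
    have SL: "cntL AT (splice AT P ups 0 sel) + (\<Sum>p\<leftarrow>sel. snd p - Suc (fst p)) + cntL AT (take 0 P) = mT AT P
      \<and> plen AT c d (splice AT P ups 0 sel) + (\<Sum>p\<leftarrow>sel. seglen AT c d P (fst p) (snd p)) + plen AT c d (take 0 P)
       = plen AT c d P + (\<Sum>p\<leftarrow>sel. plen AT c d (ups (fst p) (snd p)))"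
      by (rule splice_lem[OF c1 c2]) simp_all
    have cv: "\<And>f :: nat \<times> nat \<Rightarrow> nat. (\<Sum>p\<leftarrow>sel. f p) = (\<Sum>h\<in>{h. h < q \<and> Pp h}. f (I h, J h))"
    proof -
      fix f :: "nat \<times> nat \<Rightarrow> nat"
      have "(\<Sum>p\<leftarrow>sel. f p) = (\<Sum>h\<in>{h. h < length ps \<and> Pp h}. f (ps ! h))"
        unfolding sel_def by (rule split_sel)
      also have "\<dots> = (\<Sum>h\<in>{h. h < q \<and> Pp h}. f (I h, J h))"
        using psh lps by (intro sum.cong) auto
      finally show "(\<Sum>p\<leftarrow>sel. f p) = (\<Sum>h\<in>{h. h < q \<and> Pp h}. f (I h, J h))" .
    qed
    have e1: "cntL AT (splice AT P ups 0 sel) + (\<Sum>h\<in>{h. h < q \<and> Pp h}. J h - Suc (I h)) = m"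
      using SL cv[of "\<lambda>p. snd p - Suc (fst p)"] by (simp add: m_def)
    have e2: "plen AT c d (splice AT P ups 0 sel) + (\<Sum>h\<in>{h. h < q \<and> Pp h}. seglen AT c d P (I h) (J h))
       = plen AT c d P + (\<Sum>h\<in>{h. h < q \<and> Pp h}. plen AT c d (ups (I h) (J h)))"
      using SL cv[of "\<lambda>p. seglen AT c d P (fst p) (snd p)"] cv[of "\<lambda>p. plen AT c d (ups (fst p) (snd p))"] by simp
    then have e3: "real (plen AT c d (splice AT P ups 0 sel)) + (\<Sum>h\<in>{h. h < q \<and> Pp h}. real (seglen AT c d P (I h) (J h)))
       = real (plen AT c d P) + (\<Sum>h\<in>{h. h < q \<and> Pp h}. real (plen AT c d (ups (I h) (J h))))"
    proof -
      have "real (plen AT c d (splice AT P ups 0 sel) + (\<Sum>h\<in>{h. h < q \<and> Pp h}. seglen AT c d P (I h) (J h)))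
       = real (plen AT c d P + (\<Sum>h\<in>{h. h < q \<and> Pp h}. plen AT c d (ups (I h) (J h))))"
        by (simp only: e2)
      then show ?thesis by (simp only: of_nat_add of_nat_sum)
    qed
    have e4: "(\<Sum>h\<in>{h. h < q \<and> Pp h}. real (plen AT c d (ups (I h) (J h))))
       \<le> (\<Sum>h\<in>{h. h < q \<and> Pp h}. real (seglen AT c d P (I h) (J h)) + D h)"
      using UPh by (intro sum_mono) auto
    have e5: "(\<Sum>h\<in>{h. h < q \<and> Pp h}. real (seglen AT c d P (I h) (J h)) + D h)
       = (\<Sum>h\<in>{h. h < q \<and> Pp h}. real (seglen AT c d P (I h) (J h))) + (\<Sum>h\<in>{h. h < q \<and> Pp h}. D h)"
      by (rule sum.distrib)
    show "cntL AT (splice AT P ups 0 [ps ! h. h \<leftarrow> [0..<length ps], Pp h]) + (\<Sum>h\<in>{h. h < q \<and> Pp h}. J h - Suc (I h)) = m \<and>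
     real (plen AT c d (splice AT P ups 0 [ps ! h. h \<leftarrow> [0..<length ps], Pp h])) \<le> real (plen AT c d P) + (\<Sum>h\<in>{h. h < q \<and> Pp h}. D h)"
      using e1 e3 e4 e5 unfolding sel_def by linarith
  qed
  have P1e: "P1 AT AU ini ter c d s t P ups = splice AT P ups 0 [ps ! h. h \<leftarrow> [0..<length ps], even h]"
    unfolding P1_def PP ps_def Let_def by (rule refl)
  have P2e: "P2 AT AU ini ter c d s t P ups = splice AT P ups 0 [ps ! h. h \<leftarrow> [0..<length ps], odd h]"
    unfolding P2_def PP ps_def Let_def by (rule refl)
  have BBe: "\<And>Q. BB AT AU ini ter c d s t Q = ereal (lr - real (plen AT c d Q))"
    by (simp add: BB_def lr)
  define Bp where "Bp = lr - real (plen AT c d P)"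
  define Vr where "Vr = (\<Sum>k\<in>{1..m}. tr k)"
  have Vnn: "0 \<le> Vr" unfolding Vr_def by (rule sum_nonneg) (simp add: trnn)
  have hypV: "Vr < Bp / alpha m"
    using REV unfolding revV BBe by (simp add: Vr_def Bp_def m_def)
  show ?thesis
  proof (cases "q = 1")
    case True
    then have e0: "[ps ! h. h \<leftarrow> [0..<length ps], odd h] = []" by (simp add: lps)
    have P2P: "P2 AT AU ini ter c d s t P ups = P" unfolding P2e e0 by simp
    have "ereal (1 / alpha (mT AT (P2 AT AU ini ter c d s t P ups))) * BB AT AU ini ter c d s t (P2 AT AU ini ter c d s t P ups)
       \<ge> ereal (1 / alpha (mT AT P)) * BB AT AU ini ter c d s t P" unfolding P2P by (rule order_refl)
    then show ?thesis by blast
  next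
    case False
    then have q2: "2 \<le> q" using q1 by simp
    define Ev where "Ev = {h. h < q \<and> even h}"
    define Od where "Od = {h. h < q \<and> odd h}"
    have finE: "finite Ev" by (simp add: Ev_def)
    have finOd: "finite Od" by (simp add: Od_def)
    have EvOd: "Ev \<inter> Od = {}" "Ev \<union> Od = {..<q}" by (auto simp: Ev_def Od_def)
    have G1: "cntL AT (P1 AT AU ini ter c d s t P ups) + (\<Sum>h\<in>Ev. J h - Suc (I h)) = m \<and>
      real (plen AT c d (P1 AT AU ini ter c d s t P ups)) \<le> real (plen AT c d P) + (\<Sum>h\<in>Ev. D h)"
      unfolding P1e Ev_def by (rule GEN) auto
    have G2: "cntL AT (P2 AT AU ini ter c d s t P ups) + (\<Sum>h\<in>Od. J h - Suc (I h)) = m \<and>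
      real (plen AT c d (P2 AT AU ini ter c d s t P ups)) \<le> real (plen AT c d P) + (\<Sum>h\<in>Od. D h)"
      unfolding P2e Od_def by (rule GEN) auto
    define m1 where "m1 = mT AT (P1 AT AU ini ter c d s t P ups)"
    define m2 where "m2 = mT AT (P2 AT AU ini ter c d s t P ups)"
    have S1: "1 \<le> (\<Sum>h\<in>Ev. J h - Suc (I h))"
    proof -
      have "0 \<in> Ev" using q2 by (simp add: Ev_def)
      then have "J 0 - Suc (I 0) \<le> (\<Sum>h\<in>Ev. J h - Suc (I h))" using finE by (intro member_le_sum) auto
      moreover have "Suc (I 0) < J 0" using IJ[of 0] q2 by simp
      ultimately show ?thesis by simp
    qed
    have S2: "1 \<le> (\<Sum>h\<in>Od. J h - Suc (I h))"
    proof -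
      have "1 \<in> Od" using q2 by (simp add: Od_def)
      then have "J 1 - Suc (I 1) \<le> (\<Sum>h\<in>Od. J h - Suc (I h))" using finOd by (intro member_le_sum) auto
      moreover have "Suc (I 1) < J 1" using IJ[of 1] q2 by simp
      ultimately show ?thesis by simp
    qed
    have S12: "(\<Sum>h\<in>Ev. J h - Suc (I h)) + (\<Sum>h\<in>Od. J h - Suc (I h)) = (\<Sum>h<q. J h - Suc (I h))"
      using sum.union_disjoint[OF finE finOd EvOd(1), of "\<lambda>h. J h - Suc (I h)"] EvOd(2) by simp
    have D12: "(\<Sum>h\<in>Ev. D h) + (\<Sum>h\<in>Od. D h) = Vr"
      using sum.union_disjoint[OF finE finOd EvOd(1), of D] EvOd(2) Dsum by (simp add: Vr_def)
    have m1e: "m1 + (\<Sum>h\<in>Ev. J h - Suc (I h)) = m" using G1 by (simp add: m1_def mT_cntL)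
    have m2e: "m2 + (\<Sum>h\<in>Od. J h - Suc (I h)) = m" using G2 by (simp add: m2_def mT_cntL)
    have mm: "m1 < m" "m2 < m" "m1 + m2 \<le> m" using m1e m2e S1 S2 S12 Cover by linarith+
    have m2': "2 \<le> m"
    proof -
      have a: "1 \<le> ns ! 0" using nsr[of 0] q2 by simp
      have q1': "1 < q" using q2 by simp
      have b: "I 1 < ns ! 1" using BH[OF q1'] by blast
      have c: "I 1 = ns ! 0" using N3[of 0] q2 by (simp add: I_def)
      have d: "ns ! 1 \<le> m" using nsr[of 1] q2 by simp
      show ?thesis using a b c d by linarith
    qed
    have AC: "1 + alpha m1 + alpha m2 \<le> 2 * alpha m" by (rule alpha_comb[OF m2' mm])
    have B1: "Bp - (\<Sum>h\<in>Ev. D h) \<le> lr - real (plen AT c d (P1 AT AU ini ter c d s t P ups))"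
      using G1 by (simp add: Bp_def)
    have B2: "Bp - (\<Sum>h\<in>Od. D h) \<le> lr - real (plen AT c d (P2 AT AU ini ter c d s t P ups))"
      using G2 by (simp add: Bp_def)
    have FR: "Bp / alpha m \<le> (lr - real (plen AT c d (P1 AT AU ini ter c d s t P ups))) / alpha m1 \<or>
              Bp / alpha m \<le> (lr - real (plen AT c d (P2 AT AU ini ter c d s t P ups))) / alpha m2"
      by (rule final_real[OF alpha_ge1 alpha_ge1 alpha_ge1 AC B1 B2]) (use hypV Vnn D12 in auto)
    then show ?thesis
    proof
      assume "Bp / alpha m \<le> (lr - real (plen AT c d (P1 AT AU ini ter c d s t P ups))) / alpha m1"
      moreover have "ereal (1 / alpha (mT AT P)) * BB AT AU ini ter c d s t P = ereal (Bp / alpha m)"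
        by (simp add: BBe Bp_def m_def)
      moreover have "ereal (1 / alpha (mT AT (P1 AT AU ini ter c d s t P ups))) * BB AT AU ini ter c d s t (P1 AT AU ini ter c d s t P ups)
          = ereal ((lr - real (plen AT c d (P1 AT AU ini ter c d s t P ups))) / alpha m1)"
        by (simp add: BBe m1_def)
      ultimately show ?thesis by (intro bexI[of _ "P1 AT AU ini ter c d s t P ups"]) simp_all
    next
      assume "Bp / alpha m \<le> (lr - real (plen AT c d (P2 AT AU ini ter c d s t P ups))) / alpha m2"
      moreover have "ereal (1 / alpha (mT AT P)) * BB AT AU ini ter c d s t P = ereal (Bp / alpha m)"
        by (simp add: BBe Bp_def m_def)
      moreover have "ereal (1 / alpha (mT AT (P2 AT AU ini ter c d s t P ups))) * BB AT AU ini ter c d s t (P2 AT AU ini ter c d s t P ups)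
          = ereal ((lr - real (plen AT c d (P2 AT AU ini ter c d s t P ups))) / alpha m2)"
        by (simp add: BBe m2_def)
      ultimately show ?thesis by (intro bexI[of _ "P2 AT AU ini ter c d s t P ups"]) simp_all
    qed
  qed
qed

end
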